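(* Let $n\geq 1$. There is a bijection $\phi$ from the set of functions $f\colon[n+1]\to[n]$ to the set of triply rooted trees on $[n]$ such that, for every such $f$: (i) the orbit of $n+1$ under $f$ with $n+1$ itself removed, i.e. $\{f(n+1),f^2(n+1),\dots\}$, is equal to the set of ancestors of the second root of $\phi(f)$; and (ii) the set of periodic points of $f$ is equal to the set of ancestors of the third root of $\phi(f)$.
   Context: $[m]=\{1,\dots,m\}$. A triply rooted tree on $[n]$ is a labeled tree with vertex set $[n]$ together with three distinguished vertices $r_1,r_2,r_3$ (first, second, third root), not necessarily distinct. Ancestors are taken with respect to the first root: a vertex $u$ is an ancestor of $v$ if $u$ lies on the unique path from $r_1$ to $v$ (in particular $v$ is an ancestor of itself and $r_1$ is an ancestor of every vertex). For $f\colon[n+1]\to[n]$, the orbit of $x$ is $\{x,f(x),f^2(x),\dots\}$ (where $f$ is iterated, which makes sense since $[n]\subseteq[n+1]$), and $x$ is a periodic point of $f$ if $f^j(x)=x$ for some $j\geq 1$. *)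

theory Defs
  imports "HOL-Library.FuncSet"
begin

definition walk_adj :: "nat set set \<Rightarrow> nat list \<Rightarrow> bool" where
  "walk_adj E p \<longleftrightarrow> (\<forall>i. Suc i < length p \<longrightarrow> {p ! i, p ! Suc i} \<in> E)"

definition is_path :: "nat set set \<Rightarrow> nat list \<Rightarrow> bool" where
  "is_path E p \<longleftrightarrow> p \<noteq> [] \<and> distinct p \<and> walk_adj E p"

definition is_cycle :: "nat set set \<Rightarrow> nat list \<Rightarrow> bool" where
  "is_cycle E p \<longleftrightarrow> length p \<ge> 3 \<and> distinct p \<and> walk_adj E p \<and> {last p, hd p} \<in> E"

definition is_tree :: "nat set \<Rightarrow> nat set set \<Rightarrow> bool" where
  "is_tree V E \<longleftrightarrow>
     (\<forall>e\<in>E. e \<subseteq> V \<and> card e = 2) \<and>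
     (\<forall>u\<in>V. \<forall>v\<in>V. \<exists>p. is_path E p \<and> hd p = u \<and> last p = v) \<and>
     (\<nexists>p. is_cycle E p)"

definition ancestors :: "nat set set \<Rightarrow> nat \<Rightarrow> nat \<Rightarrow> nat set" where
  "ancestors E r v = {u. \<exists>p. is_path E p \<and> hd p = r \<and> last p = v \<and> u \<in> set p}"

definition triply_rooted_trees :: "nat \<Rightarrow> (nat set set \<times> nat \<times> nat \<times> nat) set" where
  "triply_rooted_trees n = {(E, r1, r2, r3). is_tree {1..n} E \<and>
      r1 \<in> {1..n} \<and> r2 \<in> {1..n} \<and> r3 \<in> {1..n}}"

definition funs :: "nat \<Rightarrow> (nat \<Rightarrow> nat) set" where
  "funs n = {1..n+1} \<rightarrow>\<^sub>E {1..n}"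

definition orbit_tail :: "(nat \<Rightarrow> nat) \<Rightarrow> nat \<Rightarrow> nat set" where
  "orbit_tail f x = {(f ^^ k) x | k. k \<ge> 1}"

definition periodic_points :: "nat \<Rightarrow> (nat \<Rightarrow> nat) \<Rightarrow> nat set" where
  "periodic_points n f = {x \<in> {1..n+1}. \<exists>j\<ge>1. (f ^^ j) x = x}"

end

theory Submission
  imports Defs
begin


lemma walk_Nil[simp]: "walk_adj E []" by (simp add: walk_adj_def)
lemma walk_single[simp]: "walk_adj E [x]" by (simp add: walk_adj_def)
lemma walk_Cons2[simp]: "walk_adj E (x#y#xs) \<longleftrightarrow> {x,y} \<in> E \<and> walk_adj E (y#xs)"
  unfolding walk_adj_def
  apply safe
    apply force
   apply force
  subgoal for i by (cases i) auto
  done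

lemma walk_Cons_tl: "walk_adj E (x#xs) \<Longrightarrow> walk_adj E xs"
  by (cases xs) auto

lemma walk_append: "walk_adj E (xs @ a # ys) \<longleftrightarrow> walk_adj E (xs @ [a]) \<and> walk_adj E (a # ys)"
proof (induction xs)
  case Nil then show ?case by simp
next
  case (Cons x xs)
  then show ?case by (cases xs) auto
qed

lemma walk_rev: "walk_adj E (rev xs) \<longleftrightarrow> walk_adj E xs"
proof (induction xs rule: length_induct)
  case (1 xs)
  show ?case
  proof (cases xs rule: rev_cases)
    case Nil then show ?thesis by simp
  next
    case (snoc ys y)
    note s = snoc
    show ?thesis
    proof (cases ys rule: rev_cases)
      case Nil then show ?thesis using s by simp
    next
      case (snoc zs z)
      have "walk_adj E (rev xs) \<longleftrightarrow> {y,z} \<in> E \<and> walk_adj E (rev ys)"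
        using s snoc by simp
      also have "walk_adj E (rev ys) \<longleftrightarrow> walk_adj E ys" using 1 s by simp
      also have "walk_adj E xs \<longleftrightarrow> walk_adj E (zs @ [z]) \<and> walk_adj E [z, y]"
        using s snoc walk_append[of E zs z "[y]"] by simp
      ultimately show ?thesis using snoc by (auto simp: insert_commute)
    qed
  qed
qed

lemma walk_take: "walk_adj E w \<Longrightarrow> walk_adj E (take k w)"
  unfolding walk_adj_def by auto
lemma walk_drop: "walk_adj E w \<Longrightarrow> walk_adj E (drop k w)"
  unfolding walk_adj_def by auto

lemma walk_mono: "walk_adj E w \<Longrightarrow> E \<subseteq> F \<Longrightarrow> walk_adj F w"
  unfolding walk_adj_def by blast

lemma walk_to_path:
  assumes "walk_adj E w" "w \<noteq> []"
  shows "\<exists>q. is_path E q \<and> hd q = hd w \<and> last q = last w \<and> set q \<subseteq> set w"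
  using assms
proof (induction w rule: length_induct)
  case (1 w)
  show ?case
  proof (cases "distinct w")
    case True then show ?thesis using 1 by (auto simp: is_path_def)
  next
    case False
    then obtain i j where ij: "i < j" "j < length w" "w!i = w!j"
      by (metis distinct_conv_nth linorder_neqE_nat)
    define w' where "w' = take i w @ drop j w"
    have dj: "drop j w = w!j # drop (Suc j) w" using ij by (simp add: Cons_nth_drop_Suc)
    have ti: "take (Suc i) w = take i w @ [w!i]" using ij by (simp add: take_Suc_conv_app_nth)
    have "walk_adj E (take (Suc i) w)"
      using 1(2) by (rule walk_take)
    moreover have "walk_adj E (drop j w)"
      using 1(2) by (rule walk_drop)
    ultimately have wa0: "walk_adj E (take i w @ [w!j]) \<and> walk_adj E (w!j # drop (Suc j) w)"
      using dj ti ij by simp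
    have "w' = take i w @ w!j # drop (Suc j) w" using dj by (simp add: w'_def)
    then have wa: "walk_adj E w'" using wa0 walk_append[of E "take i w" "w!j"] by presburger
    have len: "length w' < length w" using ij by (simp add: w'_def)
    have ne: "w' \<noteq> []" using dj w'_def by simp
    obtain q where q: "is_path E q" "hd q = hd w'" "last q = last w'" "set q \<subseteq> set w'"
      using 1(1) len wa ne by blast
    have "hd w' = hd w"
      using ij dj 1(3) by (cases i) (auto simp: w'_def hd_conv_nth nth_append)
    moreover have "last w' = last w" unfolding w'_def using ij by (simp only: last_appendR last_drop drop_eq_Nil not_le)
    moreover have "set w' \<subseteq> set w" unfolding w'_def by (auto dest: in_set_takeD in_set_dropD)
    ultimately show ?thesis using q by (intro exI[of _ q]) auto
  qed
qed



definition Epf :: "nat set \<Rightarrow> nat \<Rightarrow> (nat \<Rightarrow> nat) \<Rightarrow> nat set set" where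
  "Epf V r p = {{v, p v} | v. v \<in> V \<and> v \<noteq> r}"
definition orbf :: "(nat \<Rightarrow> nat) \<Rightarrow> nat \<Rightarrow> nat set" where
  "orbf p v = range (\<lambda>k. (p^^k) v)"

locale pfun =
  fixes V :: "nat set" and r :: nat and p :: "nat \<Rightarrow> nat"
  assumes fin: "finite V" and rV: "r \<in> V" and pV: "\<And>x. x \<in> V \<Longrightarrow> p x \<in> V"
    and pr: "p r = r" and reach: "\<And>v. v \<in> V \<Longrightarrow> \<exists>k. (p^^k) v = r"
begin

definition depth where "depth v = (LEAST k. (p^^k) v = r)"
abbreviation orb where "orb \<equiv> orbf p"
definition chain where "chain v = map (\<lambda>i. (p^^i) v) [0..<Suc (depth v)]"
abbreviation Ep where "Ep \<equiv> Epf V r p"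

lemma pow_V: "v \<in> V \<Longrightarrow> (p^^k) v \<in> V"
  by (induction k) (auto simp: pV)

lemma pow_r: "(p^^k) r = r"
  by (induction k) (auto simp: pr)

lemma depth_r: "v \<in> V \<Longrightarrow> (p^^depth v) v = r"
  unfolding depth_def using reach by (metis (mono_tags, lifting) LeastI)

lemma depth_least: "(p^^k) v = r \<Longrightarrow> depth v \<le> k"
  unfolding depth_def by (rule Least_le)

lemma pow_ge: assumes "v \<in> V" "depth v \<le> k" shows "(p^^k) v = r"
proof -
  have "(p^^k) v = (p^^(k - depth v)) ((p^^depth v) v)"
    using assms by (metis funpow_add le_add_diff_inverse2 o_apply)
  then show ?thesis using depth_r[OF assms(1)] pow_r by simp
qed

lemma depth_pow: assumes "v \<in> V" "i \<le> depth v" shows "depth ((p^^i) v) = depth v - i"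
proof -
  have "(p^^(depth v - i)) ((p^^i) v) = r"
    using depth_r[OF assms(1)] assms(2) by (metis funpow_add le_add_diff_inverse2 o_apply)
  then have le: "depth ((p^^i) v) \<le> depth v - i" by (rule depth_least)
  have "(p^^(depth ((p^^i) v) + i)) v = r"
    using depth_r[OF pow_V[OF assms(1)]] by (simp add: funpow_add)
  then have "depth v \<le> depth ((p^^i) v) + i" by (rule depth_least)
  with le show ?thesis by simp
qed

lemma depth0: "v \<in> V \<Longrightarrow> depth v = 0 \<longleftrightarrow> v = r"
  using depth_r[of v] depth_least[of 0 r] by auto

lemma depth_p: assumes "v \<in> V" "v \<noteq> r" shows "depth (p v) = depth v - 1"
proof -
  have "depth v \<ge> 1" using depth0 assms by fastforce
  then show ?thesis using depth_pow[OF assms(1), of 1] by simp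
qed

lemma p_neq: assumes "v \<in> V" "v \<noteq> r" shows "p v \<noteq> v"
  using depth_p[OF assms] depth0[OF assms(1)] assms by auto

lemma orb_chain: assumes "v \<in> V" shows "orb v = set (chain v)"
proof
  show "set (chain v) \<subseteq> orb v" unfolding chain_def orbf_def by auto
  show "orb v \<subseteq> set (chain v)"
  proof
    fix x assume "x \<in> orb v"
    then obtain k where k: "x = (p^^k) v" unfolding orbf_def by auto
    show "x \<in> set (chain v)"
    proof (cases "k \<le> depth v")
      case True then show ?thesis using k unfolding chain_def by (auto simp del: upt_Suc)
    next
      case False
      then have "x = (p^^depth v) v" using k pow_ge[OF assms] depth_r[OF assms] by auto
      then show ?thesis unfolding chain_def by (auto simp del: upt_Suc)
    qed
  qed
qed

lemma chain_len: "length (chain v) = Suc (depth v)"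
  unfolding chain_def by (simp del: upt_Suc)
lemma chain_nth: "i \<le> depth v \<Longrightarrow> chain v ! i = (p^^i) v"
  unfolding chain_def by (simp del: upt_Suc add: nth_map_upt)

lemma chain_distinct: assumes "v \<in> V" shows "distinct (chain v)"
  unfolding distinct_conv_nth chain_len
proof (intro allI impI)
  fix i j assume ij: "i < Suc (depth v)" "j < Suc (depth v)" "i \<noteq> j"
  then have "i \<le> depth v" "j \<le> depth v" by auto
  then have "depth ((p^^i) v) \<noteq> depth ((p^^j) v)" using depth_pow[OF assms] ij(3) by auto
  then show "chain v ! i \<noteq> chain v ! j"
    using ij chain_nth by (metis less_Suc_eq_le)
qed

lemma chain_hd: "hd (chain v) = v" unfolding chain_def by (simp del: upt_Suc add: hd_map upt_rec)
lemma chain_last: "v \<in> V \<Longrightarrow> last (chain v) = r" unfolding chain_def using depth_r by (simp add: last_map)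
lemma chain_ne: "chain v \<noteq> []" unfolding chain_def by simp

lemma Ep_edge: "{v, p v} \<in> Ep" if "v \<in> V" "v \<noteq> r"
  unfolding Epf_def using that by (intro CollectI exI[of _ v]) simp

lemma chain_walk: assumes "v \<in> V" shows "walk_adj Ep (chain v)"
  unfolding walk_adj_def
proof (intro allI impI)
  fix i assume "Suc i < length (chain v)"
  then have i: "i < depth v" unfolding chain_len by simp
  have "depth ((p^^i) v) = depth v - i" using depth_pow[OF assms] i by simp
  then have "depth ((p^^i) v) \<noteq> 0" using i by simp
  then have "(p^^i) v \<noteq> r" using depth0[OF pow_V[OF assms], of i] by simp
  then have "{(p^^i) v, p ((p^^i) v)} \<in> Ep" using Ep_edge pow_V[OF assms] by blast
  moreover have "chain v ! i = (p^^i) v" using i chain_nth by simp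
  moreover have "chain v ! Suc i = p ((p^^i) v)" using i chain_nth[of "Suc i" v] by simp
  ultimately show "{chain v ! i, chain v ! Suc i} \<in> Ep" by simp
qed

lemma Ep_sub: "e \<in> Ep \<Longrightarrow> e \<subseteq> V \<and> card e = 2"
proof -
  assume "e \<in> Ep"
  then obtain v where v: "e = {v, p v}" "v \<in> V" "v \<noteq> r" unfolding Epf_def by auto
  then have "v \<noteq> p v" using p_neq by metis
  then show ?thesis using v pV by auto
qed

lemma Ep_cases: assumes "{x, y} \<in> Ep"
  shows "(x \<in> V \<and> x \<noteq> r \<and> y = p x) \<or> (y \<in> V \<and> y \<noteq> r \<and> x = p y)"
proof -
  obtain v where v: "{x,y} = {v, p v}" "v \<in> V" "v \<noteq> r" using assms unfolding Epf_def by auto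
  then show ?thesis unfolding doubleton_eq_iff by auto
qed

lemma connected: assumes "u \<in> V" "v \<in> V" shows "\<exists>q. is_path Ep q \<and> hd q = u \<and> last q = v"
proof -
  obtain xs where xs: "chain u = xs @ [r]" using chain_last[OF assms(1)] chain_ne[of u]
    by (metis append_butlast_last_id)
  have "hd (rev (chain v)) = r" "rev (chain v) \<noteq> []"
    using chain_last[OF assms(2)] chain_ne[of v] by (auto simp: hd_rev)
  then obtain ys where ys: "rev (chain v) = r # ys" by (metis list.collapse)
  have w1: "walk_adj Ep (xs @ [r])" using chain_walk[OF assms(1)] xs by simp
  have w2: "walk_adj Ep (r # ys)" using chain_walk[OF assms(2)] walk_rev[of Ep "chain v"] ys by simp
  have w: "walk_adj Ep (xs @ r # ys)" using walk_append[of Ep xs r ys] w1 w2 by blast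
  have h: "hd (xs @ r # ys) = u" using xs chain_hd[of u] by (cases xs) auto
  have "last (r # ys) = last (rev (chain v))" using ys by simp
  also have "\<dots> = v" using chain_hd[of v] chain_ne[of v] by (simp add: last_rev)
  finally have l: "last (xs @ r # ys) = v" by simp
  obtain q where "is_path Ep q" "hd q = hd (xs @ r # ys)" "last q = last (xs @ r # ys)"
    using walk_to_path[OF w] by auto
  then show ?thesis using h l by blast
qed

lemma acyclic: "\<not> is_cycle Ep c"
proof
  assume c: "is_cycle Ep c"
  define l where "l = length c"
  define nx where "nx k = (if k + 1 < l then k + 1 else 0)" for k
  have l3: "l \<ge> 3" and dc: "distinct c" and wc: "walk_adj Ep c" and lh: "{last c, hd c} \<in> Ep"
    using c unfolding is_cycle_def l_def by auto
  have adj: "{c ! k, c ! nx k} \<in> Ep" if "k < l" for k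
  proof (cases "Suc k < l")
    case True then show ?thesis using wc unfolding walk_adj_def l_def nx_def by simp
  next
    case False
    then have "k = l - 1" "nx k = 0" using that by (auto simp: nx_def)
    moreover have "c \<noteq> []" using l3 l_def by auto
    ultimately show ?thesis using lh l3 that by (simp add: last_conv_nth hd_conv_nth l_def)
  qed
  obtain i where i: "i < l" "\<And>j. j < l \<Longrightarrow> depth (c!j) \<le> depth (c!i)"
  proof -
    let ?S = "(\<lambda>j. depth (c!j)) ` {..<l}"
    have fS: "finite ?S" by simp
    have "depth (c!0) \<in> ?S" using l3 by simp
    then have nS: "?S \<noteq> {}" by blast
    have "Max ?S \<in> ?S" using Max_in[OF fS nS] .
    then obtain i where i: "i < l" "depth (c!i) = Max ?S" by auto
    have "depth (c!j) \<le> depth (c!i)" if "j < l" for j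
      using Max_ge[OF fS, of "depth (c!j)"] that i(2) by simp
    then show ?thesis using that i(1) by blast
  qed
  have nb: "y = p (c!i)" if "{c!i, y} \<in> Ep" "y = c!j" "j < l" for y j
  proof (rule ccontr)
    assume ne: "y \<noteq> p (c!i)"
    then have h: "y \<in> V" "y \<noteq> r" "c ! i = p y" using Ep_cases[OF that(1)] by auto
    then have "depth (c!i) = depth y - 1" using depth_p[of y] by simp
    moreover have "depth y \<noteq> 0" using h depth0[of y] by simp
    ultimately have "depth y > depth (c!i)" by simp
    then show False using i(2)[OF that(3)] that(2) by simp
  qed
  have nxl: "nx k < l" for k using l3 by (simp add: nx_def)
  define j0 where "j0 = (if i = 0 then l - 1 else i - 1)"
  have j0: "j0 < l" "nx j0 = i" using i(1) l3 by (auto simp: j0_def nx_def)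
  have "c ! (nx i) = p (c!i)" using nb[OF adj[OF i(1)] refl nxl] .
  moreover have "c ! j0 = p (c!i)"
  proof -
    have "{c!j0, c!i} \<in> Ep" using adj[OF j0(1)] j0(2) by simp
    then show ?thesis using nb[of "c!j0" j0] j0 by (simp add: insert_commute)
  qed
  moreover have "nx i \<noteq> j0" using i(1) l3 by (auto simp: j0_def nx_def)
  ultimately have "c ! (nx i) = c ! j0" "nx i \<noteq> j0" by auto
  then show False using nth_eq_iff_index_eq[OF dc, of "nx i" j0] nxl[of i] j0(1) unfolding l_def by blast
qed

end


context pfun begin

lemma pow_Suc': "(p^^Suc j) v = (p^^j) (p v)"
  by (simp add: funpow_Suc_right del: funpow.simps)

lemma orb_step: "orb v = insert v (orb (p v))"
proof
  show "orb v \<subseteq> insert v (orb (p v))"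
  proof
    fix x assume "x \<in> orb v"
    then obtain k where k: "x = (p^^k) v" unfolding orbf_def by auto
    show "x \<in> insert v (orb (p v))"
    proof (cases k)
      case 0 then show ?thesis using k by simp
    next
      case (Suc j) then have "x = (p^^j) (p v)" using k pow_Suc' by simp
      then show ?thesis unfolding orbf_def by auto
    qed
  qed
  show "insert v (orb (p v)) \<subseteq> orb v"
  proof
    fix x assume "x \<in> insert v (orb (p v))"
    then show "x \<in> orb v"
    proof
      assume "x = v" then show ?thesis unfolding orbf_def by (auto intro: range_eqI[of _ _ 0])
    next
      assume "x \<in> orb (p v)"
      then obtain k where k: "x = (p^^k) (p v)" unfolding orbf_def by auto
      then have "x = (p^^(Suc k)) v" using pow_Suc' by simp
      then show ?thesis unfolding orbf_def by (rule range_eqI)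
    qed
  qed
qed

lemma self_orb: "v \<in> orb v" unfolding orbf_def by (rule range_eqI[of _ _ 0]) simp

lemma orb_r: "orb r = {r}"
  unfolding orbf_def using pow_r by auto

lemma orb_V: "v \<in> V \<Longrightarrow> orb v \<subseteq> V"
  unfolding orbf_def using pow_V by auto

lemma path_orb: "is_path Ep w \<Longrightarrow> hd w = r \<Longrightarrow> set w = orb (last w) \<and> last w \<in> V"
proof (induction w rule: rev_induct)
  case Nil then show ?case by (simp add: is_path_def)
next
  case (snoc v w')
  show ?case
  proof (cases "w' = []")
    case True
    then have "v = r" using snoc by simp
    then show ?thesis using True orb_r rV by simp
  next
    case False
    then obtain xs u where w': "w' = xs @ [u]" using append_butlast_last_id[of w'] by metis
    have wa: "walk_adj Ep (w' @ [v])" and d: "distinct (w' @ [v])"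
      using snoc(2) by (auto simp: is_path_def)
    have "walk_adj Ep (xs @ u # [v])" using wa w' by simp
    then have wxu: "walk_adj Ep (xs @ [u])" and uv: "walk_adj Ep [u, v]"
      using walk_append[of Ep xs u "[v]"] by blast+
    have "is_path Ep w'" using wxu d False w' by (simp add: is_path_def)
    moreover have "hd w' = r" using snoc(3) False by simp
    ultimately have IH: "set w' = orb u" "u \<in> V" using snoc(1) w' by auto
    have e: "{u, v} \<in> Ep" using uv by simp
    from Ep_cases[OF e] show ?thesis
    proof
      assume h: "u \<in> V \<and> u \<noteq> r \<and> v = p u"
      then have "v \<in> orb u" using orb_step[of u] self_orb[of "p u"] by simp
      then show ?thesis using IH d by auto
    next
      assume h: "v \<in> V \<and> v \<noteq> r \<and> u = p v"
      then have "set (w' @ [v]) = orb v" using IH orb_step[of v] by auto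
      then show ?thesis using h by simp
    qed
  qed
qed

lemma chain_path: assumes "v \<in> V" shows "is_path Ep (rev (chain v))"
  using chain_walk[OF assms] chain_distinct[OF assms] chain_ne[of v]
  by (simp add: is_path_def walk_rev)

lemma anc: assumes "v \<in> V" shows "ancestors Ep r v = orb v"
proof
  show "ancestors Ep r v \<subseteq> orb v"
    unfolding ancestors_def using path_orb by blast
  have "hd (rev (chain v)) = r" "last (rev (chain v)) = v" "set (rev (chain v)) = orb v"
    using chain_last[OF assms] chain_hd[of v] chain_ne[of v] orb_chain[OF assms]
    by (auto simp: hd_rev last_rev)
  then show "orb v \<subseteq> ancestors Ep r v"
    unfolding ancestors_def using chain_path[OF assms] by blast
qed

lemma tree: "is_tree V Ep"
  unfolding is_tree_def using Ep_sub connected acyclic by blast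

lemma card_orb: "v \<in> V \<Longrightarrow> card (orb v) = Suc (depth v)"
proof -
  assume v: "v \<in> V"
  have "card (orb v) = card (set (chain v))" using orb_chain[OF v] by simp
  also have "\<dots> = length (chain v)" using distinct_card[OF chain_distinct[OF v]] .
  finally show ?thesis using chain_len by simp
qed

lemma orb_inj: assumes "u1 \<in> V" "u2 \<in> V" "orb u1 = orb u2" shows "u1 = u2"
proof -
  have dd: "depth u1 = depth u2" using card_orb[OF assms(1)] card_orb[OF assms(2)] assms(3) by simp
  have "u1 \<in> orb u2" using assms(3) self_orb[of u1] by simp
  then obtain k where k: "u1 = (p^^k) u2" unfolding orbf_def by auto
  show ?thesis
  proof (cases "k \<le> depth u2")
    case True
    then have "depth u1 = depth u2 - k" using depth_pow[OF assms(2)] k by simp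
    then have "k = 0 \<or> depth u2 = 0" using dd True by linarith
    then show ?thesis using k depth0 assms dd pow_r by auto
  next
    case False
    then have "u1 = r" using pow_ge[OF assms(2)] k by simp
    then have "u2 = r" using dd depth0[OF assms(2)] depth0[OF rV] by simp
    then show ?thesis using \<open>u1 = r\<close> by simp
  qed
qed

lemma notin_orb_p: assumes "v \<in> V" "v \<noteq> r" shows "v \<notin> orb (p v)"
proof
  assume "v \<in> orb (p v)"
  then obtain k where "v = (p^^k) (p v)" unfolding orbf_def by auto
  then have k: "(p^^Suc k) v = v" using pow_Suc'[of k v] by simp
  have d1: "depth v \<ge> 1" using depth0[OF assms(1)] assms(2) by simp
  show False
  proof (cases "Suc k \<le> depth v")
    case True
    have "depth ((p^^Suc k) v) = depth v - Suc k" using depth_pow[OF assms(1) True] .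
    then have "depth v = depth v - Suc k" unfolding k .
    then show False using d1 True by simp
  next
    case False
    then have "(p^^Suc k) v = r" by (intro pow_ge[OF assms(1)]) simp
    then show False using k assms(2) by simp
  qed
qed

lemma orb_p: assumes "v \<in> V" "v \<noteq> r" shows "orb (p v) = orb v - {v}"
  using orb_step[of v] notin_orb_p[OF assms] by auto

end

lemma Epf_inj:
  assumes "pfun V r p" "pfun V r q" "Epf V r p = Epf V r q" "v \<in> V"
  shows "p v = q v"
proof -
  interpret P: pfun V r p by fact
  interpret Q: pfun V r q by fact
  have oo: "orbf p x = orbf q x" if "x \<in> V" for x
    using P.anc[OF that] Q.anc[OF that] assms(3) by simp
  show ?thesis
  proof (cases "v = r")
    case True then show ?thesis using P.pr Q.pr by simp
  next
    case False
    have "orbf p (q v) = orbf q (q v)" using oo[OF Q.pV[OF assms(4)]] .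
    also have "\<dots> = orbf q v - {v}" using Q.orb_p[OF assms(4) False] .
    also have "\<dots> = orbf p v - {v}" using oo assms(4) by simp
    also have "\<dots> = orbf p (p v)" using P.orb_p[OF assms(4) False] by simp
    finally have "orbf p (q v) = orbf p (p v)" .
    from P.orb_inj[OF Q.pV[OF assms(4)] P.pV[OF assms(4)] this] show ?thesis by simp
  qed
qed



lemma tree_to_pfun:
  assumes fin: "finite V" and T: "is_tree V E" and rV: "r \<in> V"
  shows "\<exists>p. p \<in> V \<rightarrow>\<^sub>E V \<and> pfun V r p \<and> Epf V r p = E"
proof -
  have Esub: "\<And>e. e \<in> E \<Longrightarrow> e \<subseteq> V \<and> card e = 2"
    and conn: "\<And>u v. u \<in> V \<Longrightarrow> v \<in> V \<Longrightarrow> \<exists>q. is_path E q \<and> hd q = u \<and> last q = v"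
    and acyc: "\<And>c. \<not> is_cycle E c" using T unfolding is_tree_def by blast+
  define dist where "dist v = (LEAST k. \<exists>w. is_path E w \<and> hd w = r \<and> last w = v \<and> length w = Suc k)" for v
  have exw: "\<exists>w. is_path E w \<and> hd w = r \<and> last w = v \<and> length w = Suc (dist v)" if vV: "v \<in> V" for v
  proof -
    obtain w where w: "is_path E w" "hd w = r" "last w = v" using conn[OF rV vV] by blast
    then have "length w = Suc (length w - 1)" by (cases w) (auto simp: is_path_def)
    then have "\<exists>k. \<exists>w. is_path E w \<and> hd w = r \<and> last w = v \<and> length w = Suc k" using w by blast
    then show ?thesis unfolding dist_def by (rule LeastI_ex)
  qed
  have distle: "dist v \<le> k" if "is_path E w" "hd w = r" "last w = v" "length w = Suc k" for v w k
    unfolding dist_def using that by (intro Least_le) blast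
  have step: "\<exists>u. u \<in> V \<and> {u,v} \<in> E \<and> dist u < dist v" if v: "v \<in> V" "v \<noteq> r" for v
  proof -
    obtain w where w: "is_path E w" "hd w = r" "last w = v" "length w = Suc (dist v)" using exw[OF v(1)] by blast
    have "w \<noteq> []" using w by (auto simp: is_path_def)
    then obtain ws where ws: "w = ws @ [v]" using w(3) append_butlast_last_id[of w] by metis
    have "ws \<noteq> []" using ws w(2) v(2) by auto
    then obtain xs u where xs: "ws = xs @ [u]" using append_butlast_last_id[of ws] by metis
    have wa: "walk_adj E (xs @ u # [v])" using w(1) ws xs by (simp add: is_path_def)
    then have "walk_adj E (xs @ [u])" "walk_adj E [u, v]" using walk_append[of E xs u "[v]"] by blast+
    then have e: "{u, v} \<in> E" and pws: "is_path E ws"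
      using w(1) ws xs by (auto simp: is_path_def)
    have "hd ws = r" using w(2) ws \<open>ws \<noteq> []\<close> by simp
    moreover have "last ws = u" using xs by simp
    moreover have "length ws = Suc (dist v - 1)" using w(4) ws \<open>ws \<noteq> []\<close> by (cases ws) auto
    ultimately have "dist u \<le> dist v - 1" using distle[OF pws] by blast
    moreover have "dist v \<ge> 1" using w(4) ws \<open>ws \<noteq> []\<close> by (cases ws) auto
    moreover have "u \<in> V" using Esub[OF e] by auto
    ultimately show ?thesis using e by (intro exI[of _ u]) auto
  qed
  define p0 where "p0 v = (if v = r then r else SOME u. u \<in> V \<and> {u,v} \<in> E \<and> dist u < dist v)" for v
  define p where "p = restrict p0 V"
  have pprop: "p v \<in> V \<and> {p v, v} \<in> E \<and> dist (p v) < dist v" if "v \<in> V" "v \<noteq> r" for v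
  proof -
    have "p v = (SOME u. u \<in> V \<and> {u,v} \<in> E \<and> dist u < dist v)" using that by (simp add: p_def p0_def)
    then show ?thesis using someI_ex[OF step[OF that]] by simp
  qed
  have pr: "p r = r" using rV by (simp add: p_def p0_def)
  have pV: "p x \<in> V" if "x \<in> V" for x using pprop[OF that] pr rV by (cases "x = r") auto
  have reach: "\<exists>k. (p^^k) v = r" if "v \<in> V" for v
    using that
  proof (induction v rule: measure_induct_rule[of dist])
    case (less v)
    show ?case
    proof (cases "v = r")
      case True then show ?thesis by (intro exI[of _ 0]) simp
    next
      case False
      then obtain k where "(p^^k) (p v) = r" using less pprop[OF less(2) False] by blast
      then have "(p^^Suc k) v = r" by (simp add: funpow_Suc_right del: funpow.simps)
      then show ?thesis by blast
    qed
  qed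
  interpret P: pfun V r p using fin rV pV pr reach by unfold_locales auto
  have ext: "p \<in> V \<rightarrow>\<^sub>E V" unfolding p_def using pV by (auto simp: p_def)
  have sub: "Epf V r p \<subseteq> E"
  proof
    fix e assume "e \<in> Epf V r p"
    then obtain v where "e = {v, p v}" "v \<in> V" "v \<noteq> r" unfolding Epf_def by auto
    then show "e \<in> E" using pprop by (auto simp: insert_commute)
  qed
  have sup: "E \<subseteq> Epf V r p"
  proof
    fix e assume eE: "e \<in> E"
    then obtain x y where xy: "e = {x, y}" "x \<noteq> y" using Esub[OF eE] by (meson card_2_iff)
    have xyV: "x \<in> V" "y \<in> V" using Esub[OF eE] xy by auto
    show "e \<in> Epf V r p"
    proof (rule ccontr)
      assume ne: "e \<notin> Epf V r p"
      obtain q where q: "is_path (Epf V r p) q" "hd q = x" "last q = y" using P.connected[OF xyV] by blast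
      have "q \<noteq> []" using q by (simp add: is_path_def)
      have l2: "length q \<ge> 2"
      proof (rule ccontr)
        assume "\<not> length q \<ge> 2"
        moreover have "length q \<noteq> 0" using \<open>q \<noteq> []\<close> by simp
        ultimately have "length q = 1" by linarith
        then obtain z where "q = [z]" by (cases q) auto
        then show False using q xy by simp
      qed
      have l3: "length q \<ge> 3"
      proof (rule ccontr)
        assume "\<not> length q \<ge> 3"
        then have "length q = 2" using l2 by simp
        then obtain a b where "q = [a, b]" by (cases q; cases "tl q") auto
        then have "q = [x, y]" using q by simp
        then have "{x, y} \<in> Epf V r p" using q(1) by (simp add: is_path_def)
        then show False using ne xy by simp
      qed
      have "is_cycle E q"
        unfolding is_cycle_def using q l3 walk_mono[OF _ sub] xy eE
        by (auto simp: is_path_def insert_commute)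
      then show False using acyc by blast
    qed
  qed
  show ?thesis using ext P.pfun_axioms sub sup by blast
qed

definition PR :: "nat \<Rightarrow> ((nat \<Rightarrow> nat) \<times> nat \<times> nat \<times> nat) set" where
  "PR n = {(p, r1, r2, r3). p \<in> {1..n} \<rightarrow>\<^sub>E {1..n} \<and> r1 \<in> {1..n} \<and> r2 \<in> {1..n} \<and> r3 \<in> {1..n} \<and>
      pfun {1..n} r1 p}"

definition toT :: "nat \<Rightarrow> ((nat \<Rightarrow> nat) \<times> nat \<times> nat \<times> nat) \<Rightarrow> (nat set set \<times> nat \<times> nat \<times> nat)" where
  "toT n = (\<lambda>(p, r1, r2, r3). (Epf {1..n} r1 p, r1, r2, r3))"

lemma part2_bij: "bij_betw (toT n) (PR n) (triply_rooted_trees n)"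
  unfolding bij_betw_def
proof (intro conjI)
  show "inj_on (toT n) (PR n)"
  proof (rule inj_onI)
    fix a b assume a: "a \<in> PR n" and b: "b \<in> PR n" and eq: "toT n a = toT n b"
    obtain p r1 r2 r3 where ap: "a = (p, r1, r2, r3)" by (cases a) auto
    obtain q s1 s2 s3 where bq: "b = (q, s1, s2, s3)" by (cases b) auto
    have e: "Epf {1..n} r1 p = Epf {1..n} r1 q" "r1 = s1" "r2 = s2" "r3 = s3"
      using eq ap bq by (auto simp: toT_def)
    have pf: "pfun {1..n} r1 p" "pfun {1..n} r1 q" "p \<in> {1..n} \<rightarrow>\<^sub>E {1..n}" "q \<in> {1..n} \<rightarrow>\<^sub>E {1..n}"
      using a b ap bq e(2) by (auto simp: PR_def)
    have "p = q"
    proof (rule extensionalityI[of _ "{1..n}"])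
      show "p \<in> extensional {1..n}" "q \<in> extensional {1..n}" using pf(3,4) by (auto simp: PiE_def)
      show "p x = q x" if "x \<in> {1..n}" for x using Epf_inj[OF pf(1,2) e(1) that] .
    qed
    then show "a = b" using ap bq e by simp
  qed
  show "toT n ` PR n = triply_rooted_trees n"
  proof
    show "toT n ` PR n \<subseteq> triply_rooted_trees n"
    proof
      fix t assume "t \<in> toT n ` PR n"
      then obtain p r1 r2 r3 where "(p, r1, r2, r3) \<in> PR n" "t = toT n (p, r1, r2, r3)" by auto
      then show "t \<in> triply_rooted_trees n" using pfun.tree
        by (auto simp: PR_def toT_def triply_rooted_trees_def)
    qed
    show "triply_rooted_trees n \<subseteq> toT n ` PR n"
    proof
      fix t assume "t \<in> triply_rooted_trees n"
      then obtain E r1 r2 r3 where t: "t = (E, r1, r2, r3)" "is_tree {1..n} E" "r1 \<in> {1..n}" "r2 \<in> {1..n}" "r3 \<in> {1..n}"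
        by (auto simp: triply_rooted_trees_def)
      obtain p where p: "p \<in> {1..n} \<rightarrow>\<^sub>E {1..n}" "pfun {1..n} r1 p" "Epf {1..n} r1 p = E"
        using tree_to_pfun[OF _ t(2) t(3)] by auto
      have "(p, r1, r2, r3) \<in> PR n" using p t by (simp add: PR_def)
      moreover have "toT n (p, r1, r2, r3) = t" using p t by (simp add: toT_def)
      ultimately show "t \<in> toT n ` PR n" by force
    qed
  qed
qed

lemma part2_anc: "(p, r1, r2, r3) \<in> PR n \<Longrightarrow> v \<in> {1..n} \<Longrightarrow> ancestors (Epf {1..n} r1 p) r1 v = orbf p v"
  using pfun.anc by (auto simp: PR_def)



definition follows :: "('a \<Rightarrow> 'a) \<Rightarrow> 'a list \<Rightarrow> bool" where
  "follows g xs \<longleftrightarrow> (\<forall>i. Suc i < length xs \<longrightarrow> g (xs!i) = xs!Suc i)"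

lemma follows_pow: "follows g xs \<Longrightarrow> i + j < length xs \<Longrightarrow> (g^^j) (xs!i) = xs!(i+j)"
proof (induction j)
  case 0 then show ?case by simp
next
  case (Suc j)
  then have "(g^^j) (xs!i) = xs!(i+j)" by simp
  then show ?case using Suc(2,3) unfolding follows_def by simp
qed

lemma follows_pow0: "follows g xs \<Longrightarrow> j < length xs \<Longrightarrow> (g^^j) (xs!0) = xs!j"
  using follows_pow[of g xs 0 j] by simp

lemma follows_cong: "follows g xs \<Longrightarrow> (\<And>i. Suc i < length xs \<Longrightarrow> h (xs!i) = g (xs!i)) \<Longrightarrow> follows h xs"
  unfolding follows_def by simp

lemma follows_append:
  "follows g (xs @ ys) \<longleftrightarrow> follows g xs \<and> follows g ys \<and> (xs \<noteq> [] \<longrightarrow> ys \<noteq> [] \<longrightarrow> g (last xs) = hd ys)"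
proof (cases "xs = [] \<or> ys = []")
  case True then show ?thesis by (auto simp: follows_def)
next
  case False
  show ?thesis
  proof
    assume h: "follows g (xs @ ys)"
    have "follows g xs" unfolding follows_def
    proof (intro allI impI)
      fix i assume "Suc i < length xs"
      then show "g (xs ! i) = xs ! Suc i" using h[unfolded follows_def, rule_format, of i] by (simp add: nth_append)
    qed
    moreover have "follows g ys" unfolding follows_def
    proof (intro allI impI)
      fix i assume "Suc i < length ys"
      then show "g (ys ! i) = ys ! Suc i" using h[unfolded follows_def, rule_format, of "length xs + i"]
        by (simp add: nth_append)
    qed
    moreover have "g (last xs) = hd ys"
      using h[unfolded follows_def, rule_format, of "length xs - 1"] False
      by (simp add: nth_append last_conv_nth hd_conv_nth)
    ultimately show "follows g xs \<and> follows g ys \<and> (xs \<noteq> [] \<longrightarrow> ys \<noteq> [] \<longrightarrow> g (last xs) = hd ys)" by simp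
  next
    assume h: "follows g xs \<and> follows g ys \<and> (xs \<noteq> [] \<longrightarrow> ys \<noteq> [] \<longrightarrow> g (last xs) = hd ys)"
    show "follows g (xs @ ys)" unfolding follows_def
    proof (intro allI impI)
      fix i assume i: "Suc i < length (xs @ ys)"
      consider "Suc i < length xs" | "Suc i = length xs" | "Suc i > length xs" by linarith
      then show "g ((xs @ ys) ! i) = (xs @ ys) ! Suc i"
      proof cases
        case 1 then show ?thesis using h unfolding follows_def by (simp add: nth_append)
      next
        case 2
        then have "i = length xs - 1" by simp
        then show ?thesis using h False
          by (simp add: nth_append last_conv_nth hd_conv_nth)
      next
        case 3
        then have "Suc (i - length xs) < length ys" using i by simp
        then show ?thesis using h 3 unfolding follows_def
          by (simp add: nth_append Suc_diff_le less_imp_le_nat not_less)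
      qed
    qed
  qed
qed

lemma follows_orb:
  assumes "follows g xs" "xs \<noteq> []" "g (last xs) = last xs"
  shows "orbf g (hd xs) = set xs"
proof
  have hx: "hd xs = xs!0" using assms(2) by (simp add: hd_conv_nth)
  show "orbf g (hd xs) \<subseteq> set xs"
  proof
    fix x assume "x \<in> orbf g (hd xs)"
    then obtain k where k: "x = (g^^k) (xs!0)" unfolding orbf_def hx by auto
    show "x \<in> set xs"
    proof (cases "k < length xs")
      case True then show ?thesis using k follows_pow0[OF assms(1)] by simp
    next
      case False
      have lx: "last xs = xs ! (length xs - 1)" using assms(2) by (simp add: last_conv_nth)
      have fx: "(g^^j) (last xs) = last xs" for j by (induction j) (simp_all add: assms(3))
      have "(g^^k) = (g^^(k - (length xs - 1))) \<circ> (g^^(length xs - 1))"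
        using False by (simp flip: funpow_add)
      then have "(g^^k) (xs!0) = (g^^(k - (length xs - 1))) ((g^^(length xs - 1)) (xs!0))"
        by simp
      also have "\<dots> = last xs" using follows_pow0[OF assms(1), of "length xs - 1"] assms(2) lx fx by simp
      finally show ?thesis using k assms(2) by simp
    qed
  qed
  show "set xs \<subseteq> orbf g (hd xs)"
  proof
    fix x assume "x \<in> set xs"
    then obtain k where "k < length xs" "x = xs!k" by (auto simp: in_set_conv_nth)
    then have "x = (g^^k) (hd xs)" using follows_pow0[OF assms(1)] hx by simp
    then show "x \<in> orbf g (hd xs)" unfolding orbf_def by simp
  qed
qed

definition nxt :: "nat list \<Rightarrow> nat \<Rightarrow> nat \<Rightarrow> nat" where
  "nxt xs d x = the (map_of (zip xs (tl xs @ [d])) x)"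

lemma nxt_nth: assumes "distinct xs" "i < length xs"
  shows "nxt xs d (xs!i) = (if Suc i < length xs then xs!Suc i else d)"
proof -
  have l: "length xs = length (tl xs @ [d])" using assms(2) by simp
  have "map_of (zip xs (tl xs @ [d])) (xs!i) = Some ((tl xs @ [d])!i)"
    using map_of_zip_nth[OF l assms(1), of i] assms(2) l by argo
  moreover have "(tl xs @ [d])!i = (if Suc i < length xs then xs!Suc i else d)"
  proof (cases "Suc i < length xs")
    case True
    have "i < length (tl xs)" using True by simp
    then have "(tl xs @ [d])!i = tl xs ! i" by (rule nth_append_left)
    also have "\<dots> = xs ! Suc i" using True by (simp add: nth_tl)
    finally show ?thesis using True by simp
  next
    case False
    then have "i = length (tl xs)" using assms(2) by simp
    then show ?thesis using False by (simp only: nth_append_length) simp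
  qed
  ultimately show ?thesis by (simp add: nxt_def)
qed

lemma follows_nxt: "distinct xs \<Longrightarrow> follows (nxt xs d) xs"
  unfolding follows_def using nxt_nth by simp

lemma nxt_last: "distinct xs \<Longrightarrow> xs \<noteq> [] \<Longrightarrow> nxt xs d (last xs) = d"
  using nxt_nth[of xs "length xs - 1" d] by (simp add: last_conv_nth)

lemma nxt_in: assumes "distinct xs" "x \<in> set xs" shows "nxt xs d x \<in> insert d (set xs)"
proof -
  obtain i where i: "i < length xs" "x = xs!i" using assms(2) by (auto simp: in_set_conv_nth)
  show ?thesis using nxt_nth[OF assms(1) i(1), of d] i by auto
qed



lemma fpa: "(g^^a) ((g^^b) x) = (g^^(a+b)) x" by (simp add: funpow_add)
lemma fpS: "(g^^a) (g x) = (g^^(Suc a)) x" by (simp add: funpow_Suc_right del: funpow.simps)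

lemma follows_reach: assumes "follows g xs" "x \<in> set xs" shows "\<exists>k. (g^^k) x = last xs"
proof -
  obtain i where i: "i < length xs" "x = xs!i" using assms(2) by (auto simp: in_set_conv_nth)
  have "(g^^(length xs - 1 - i)) (xs!i) = xs!(i + (length xs - 1 - i))"
    using follows_pow[OF assms(1)] i(1) by simp
  also have "\<dots> = last xs" using i(1) by (cases xs rule: rev_cases) (auto simp: nth_append)
  finally show ?thesis using i by blast
qed

locale fdyn =
  fixes n :: nat and f :: "nat \<Rightarrow> nat"
  assumes fF: "f \<in> funs n"
begin

abbreviation VV where "VV \<equiv> {1..n}"

lemma fV: "x \<in> {1..Suc n} \<Longrightarrow> f x \<in> VV"
  using fF unfolding funs_def by auto

lemma fext: "x \<notin> {1..Suc n} \<Longrightarrow> f x = undefined"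
  using fF unfolding funs_def by (auto simp: PiE_def extensional_def)

lemma fV': "x \<in> VV \<Longrightarrow> f x \<in> VV" using fV by auto

lemma powV: "x \<in> VV \<Longrightarrow> (f^^k) x \<in> VV"
proof (induction k)
  case 0 then show ?case by simp
next
  case (Suc k) then show ?case using fV'[OF Suc.IH[OF Suc.prems]] by (simp del: atLeastAtMost_iff)
qed

definition per where "per x \<longleftrightarrow> (\<exists>j\<ge>1. (f^^j) x = x)"
definition Pset where "Pset = {x \<in> VV. per x}"

lemma pp: "periodic_points n f = Pset"
proof -
  have "\<not> per (Suc n)"
  proof
    assume "per (Suc n)"
    then obtain j where j: "j \<ge> 1" "(f^^j) (Suc n) = Suc n" unfolding per_def by auto
    have "(f^^j) (Suc n) = (f^^(j-1)) (f (Suc n))"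
      using j(1) fpS[where g=f and a="j-1" and x="Suc n"] by simp
    moreover have "f (Suc n) \<in> VV" using fV by simp
    ultimately have "(f^^j) (Suc n) \<in> VV" using powV by simp
    then show False using j by simp
  qed
  then show ?thesis unfolding periodic_points_def Pset_def per_def
    by (auto simp: atLeastAtMostSuc_conv)
qed

lemma per_f: "per x \<Longrightarrow> per (f x)"
  unfolding per_def by (metis funpow_swap1)

lemma per_pow: "per x \<Longrightarrow> per ((f^^k) x)"
  by (induction k) (auto simp: per_f)

lemma Pset_f: "x \<in> Pset \<Longrightarrow> f x \<in> Pset"
  unfolding Pset_def using per_f fV' by auto

lemma ev_per: assumes "x \<in> VV" shows "\<exists>k. per ((f^^k) x)"
proof -
  define g where "g i = (f^^i) x" for i
  have "\<not> inj_on g {..n}"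
  proof
    assume "inj_on g {..n}"
    moreover have "g ` {..n} \<subseteq> VV" using powV[OF assms] by (auto simp: g_def)
    ultimately have "card {..n} \<le> card VV" by (metis card_inj_on_le finite_atLeastAtMost)
    then show False by simp
  qed
  then obtain i j where ij: "i \<le> n" "j \<le> n" "i \<noteq> j" "g i = g j" unfolding inj_on_def by auto
  then obtain i j where ij: "i < j" "g i = g j" by (metis linorder_neqE_nat)
  have "(f^^(j - i)) ((f^^i) x) = (f^^j) x"
    using ij(1) fpa[where g=f and a="j-i" and b=i and x=x] by simp
  then have "per ((f^^i) x)" unfolding per_def using ij by (auto simp: g_def intro!: exI[of _ "j - i"])
  then show ?thesis by blast
qed

definition prd where "prd x = (LEAST k. k \<ge> 1 \<and> (f^^k) x = x)"

lemma prd: "per x \<Longrightarrow> prd x \<ge> 1 \<and> (f^^prd x) x = x"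
  unfolding per_def prd_def by (rule LeastI_ex)

lemma prd_min: "1 \<le> k \<Longrightarrow> k < prd x \<Longrightarrow> (f^^k) x \<noteq> x"
  unfolding prd_def using not_less_Least by blast

lemma pow_mult: "per x \<Longrightarrow> (f^^(prd x * q)) x = x"
proof (induction q)
  case 0 then show ?case by simp
next
  case (Suc q)
  have "(f^^(prd x * Suc q)) x = (f^^(prd x)) ((f^^(prd x * q)) x)"
    by (simp add: fpa)
  then show ?case using Suc prd by simp
qed

lemma pow_mod: assumes "per x" shows "(f^^k) x = (f^^(k mod prd x)) x"
proof -
  have "(f^^k) x = (f^^(k mod prd x)) ((f^^(prd x * (k div prd x))) x)"
    by (simp add: fpa)
  then show ?thesis using pow_mult[OF assms] by simp
qed

lemma pow_inj_cycle: assumes "per x" "i < prd x" "j < prd x" "(f^^i) x = (f^^j) x" shows "i = j"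
proof (rule ccontr)
  assume "i \<noteq> j"
  then obtain a b where ab: "a < b" "b < prd x" "(f^^a) x = (f^^b) x"
    using assms by (metis linorder_neqE_nat)
  have "(f^^(prd x - b + a)) x = (f^^(prd x - b)) ((f^^a) x)" by (simp add: fpa)
  also have "\<dots> = (f^^(prd x - b)) ((f^^b) x)" using ab by simp
  also have "\<dots> = (f^^(prd x)) x" using ab(2) by (simp add: fpa)
  also have "\<dots> = x" using prd[OF assms(1)] by simp
  finally have eq: "(f^^(prd x - b + a)) x = x" .
  have "1 \<le> prd x - b + a" "prd x - b + a < prd x" using ab by linarith+
  then show False using prd_min[of "prd x - b + a" x] eq by blast
qed

lemma inj_Pset: assumes "x \<in> Pset" "y \<in> Pset" "f x = f y" shows "x = y"
proof -
  have px: "per x" and py: "per y" using assms by (auto simp: Pset_def)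
  define K where "K = prd x * prd y"
  have K1: "K \<ge> 1" using prd[OF px] prd[OF py] by (simp add: K_def)
  have "(f^^K) x = x" using pow_mult[OF px] by (simp add: K_def)
  moreover have "(f^^K) y = y" using pow_mult[OF py] by (simp add: K_def mult.commute)
  moreover have "(f^^K) z = (f^^(K - 1)) (f z)" for z
    using K1 fpS[where g=f and a="K - 1" and x=z] by simp
  ultimately show ?thesis using assms(3) by metis
qed

end


context fdyn begin

definition a where "a = f (Suc n)"
definition t where "t = (LEAST k. per ((f^^k) a))"
definition c0 where "c0 = (f^^t) a"
definition m where "m = prd c0"
definition r1 where "r1 = (f^^(m-1)) c0"
definition Tl where "Tl = map (\<lambda>i. (f^^i) a) [0..<t]"
definition Cl where "Cl = map (\<lambda>i. (f^^i) c0) [0..<m]"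
definition Q where "Q = Pset - set Cl"
definition qs where "qs = sorted_list_of_set Q"
definition L where "L = map f qs"
definition r3 where "r3 = hd (L @ Cl)"
definition pF where "pF x = (if x \<in> VV then (if x = r1 then r1 else if x \<in> Q then nxt L c0 x else f x) else undefined)"

lemma aV: "a \<in> VV" unfolding a_def using fV by simp

lemma c0_per: "per c0"
  unfolding c0_def t_def using ev_per[OF aV] by (rule LeastI_ex)

lemma t_min: "k < t \<Longrightarrow> \<not> per ((f^^k) a)"
  unfolding t_def by (rule not_less_Least)

lemma c0V: "c0 \<in> VV" unfolding c0_def using powV[OF aV] .

lemma m1: "m \<ge> 1" and fm: "(f^^m) c0 = c0" using prd[OF c0_per] by (auto simp: m_def)

lemma Tl_len: "length Tl = t" by (simp add: Tl_def)
lemma Cl_len: "length Cl = m" by (simp add: Cl_def)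
lemma Tl_nth: "i < t \<Longrightarrow> Tl!i = (f^^i) a" by (simp add: Tl_def)
lemma Cl_nth: "i < m \<Longrightarrow> Cl!i = (f^^i) c0" by (simp add: Cl_def)
lemma Cl_ne: "Cl \<noteq> []" using m1 by (simp add: Cl_def)

lemma Cl_dist: "distinct Cl"
  unfolding distinct_conv_nth Cl_len
  using pow_inj_cycle[OF c0_per] by (simp add: Cl_nth m_def) blast

lemma Tl_dist: "distinct Tl"
  unfolding distinct_conv_nth Tl_len
proof (intro allI impI)
  fix i j assume ij: "i < t" "j < t" "i \<noteq> j"
  show "Tl!i \<noteq> Tl!j"
  proof
    assume "Tl!i = Tl!j"
    then have eq: "(f^^i) a = (f^^j) a" using ij by (simp add: Tl_nth)
    {
      fix u v assume uv: "u < v" "v < t" "(f^^u) a = (f^^v) a"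
      have "(f^^(v-u)) ((f^^u) a) = (f^^v) a" using uv(1) fpa[where g=f and a="v-u" and b=u and x=a] by simp
      then have "per ((f^^u) a)" unfolding per_def using uv by (intro exI[of _ "v-u"]) auto
      then have False using t_min uv by auto
    }
    then show False using eq ij by (metis linorder_neqE_nat)
  qed
qed

lemma Tl_notper: "x \<in> set Tl \<Longrightarrow> \<not> per x"
  using t_min by (auto simp: Tl_def)

lemma Cl_per: "x \<in> set Cl \<Longrightarrow> x \<in> Pset"
  using per_pow[OF c0_per] powV[OF c0V] by (auto simp: Cl_def Pset_def)

lemma Tl_V: "set Tl \<subseteq> VV" using powV[OF aV] by (auto simp: Tl_def)
lemma Cl_V: "set Cl \<subseteq> VV" using Cl_per by (auto simp: Pset_def)

lemma TC_dist: "distinct (Tl @ Cl)"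
  using Tl_dist Cl_dist Tl_notper Cl_per by (auto simp: Pset_def)

lemma r1_last: "r1 = last Cl"
  using m1 by (simp add: r1_def Cl_def last_map)

lemma f_r1: "f r1 = c0"
proof -
  have "f r1 = (f^^(Suc (m-1))) c0" unfolding r1_def by simp
  then show ?thesis using m1 fm by simp
qed

lemma follows_Cl: "follows f Cl"
  unfolding follows_def Cl_len by (simp add: Cl_nth)

lemma follows_Tl: "follows f Tl"
  unfolding follows_def Tl_len by (simp add: Tl_nth)

lemma hd_Cl: "hd Cl = c0" using m1 by (simp add: Cl_def hd_map)

lemma follows_TC: "follows f (Tl @ Cl)"
proof -
  have "f (last Tl) = hd Cl" if "Tl \<noteq> []"
  proof -
    have t0: "t \<ge> 1" using that Tl_len by (cases t) auto
    have "last Tl = (f^^(t-1)) a" using t0 by (simp add: Tl_def last_map)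
    then have "f (last Tl) = (f^^(Suc (t-1))) a" by simp
    then show ?thesis using t0 hd_Cl by (simp add: c0_def)
  qed
  then show ?thesis using follows_append follows_Tl follows_Cl by blast
qed

lemma hd_TC: "hd (Tl @ Cl) = a"
  using Cl_ne hd_Cl by (cases "t = 0") (auto simp: c0_def Tl_def hd_map)

lemma Cl_closed: "x \<in> set Cl \<Longrightarrow> f x \<in> set Cl"
proof -
  assume "x \<in> set Cl"
  then obtain i where i: "i < m" "x = (f^^i) c0" by (auto simp: Cl_def)
  have "f x = (f^^(Suc i)) c0" using i by simp
  also have "\<dots> = (f^^(Suc i mod m)) c0" using pow_mod[OF c0_per] by (simp add: m_def)
  finally show ?thesis using m1 by (auto simp: Cl_def)
qed

lemma Cl_pre: "y \<in> set Cl \<Longrightarrow> \<exists>x\<in>set Cl. f x = y"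
proof -
  assume "y \<in> set Cl"
  then obtain i where i: "i < m" "y = (f^^i) c0" by (auto simp: Cl_def)
  define j where "j = (i + m - 1) mod m"
  have j: "j < m" using m1 by (simp add: j_def)
  have "f ((f^^j) c0) = (f^^(Suc j)) c0" by simp
  also have "\<dots> = (f^^(Suc j mod m)) c0" using pow_mod[OF c0_per] by (simp add: m_def)
  also have "Suc j mod m = i" using i(1) m1 unfolding j_def
    by (metis Suc_diff_1 add_Suc_right add_gr_0 less_le_trans mod_Suc_eq mod_add_self2 mod_less zero_less_one)
  finally show ?thesis using i j by (auto simp: Cl_def)
qed

lemma finQ: "finite Q" unfolding Q_def Pset_def by auto
lemma Q_V: "Q \<subseteq> VV" unfolding Q_def Pset_def by auto

lemma fQ: "f ` Q = Q"
proof (rule endo_inj_surj[OF finQ])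
  show "f ` Q \<subseteq> Q"
  proof
    fix y assume "y \<in> f ` Q"
    then obtain x where x: "x \<in> Q" "y = f x" by auto
    have "y \<in> Pset" using x Pset_f by (auto simp: Q_def)
    moreover have "y \<notin> set Cl"
    proof
      assume "y \<in> set Cl"
      then obtain z where "z \<in> set Cl" "f z = y" using Cl_pre by blast
      then have "z = x" using inj_Pset[of z x] Cl_per x by (auto simp: Q_def)
      then show False using x \<open>z \<in> set Cl\<close> by (auto simp: Q_def)
    qed
    ultimately show "y \<in> Q" by (simp add: Q_def)
  qed
  show "inj_on f Q" unfolding inj_on_def using inj_Pset by (auto simp: Q_def)
qed

lemma qs_set: "set qs = Q" unfolding qs_def using finQ by simp
lemma qs_dist: "distinct qs" unfolding qs_def by simp

lemma L_set: "set L = Q" unfolding L_def using qs_set fQ by simp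
lemma L_dist: "distinct L"
  unfolding L_def using qs_dist qs_set inj_Pset by (auto simp: distinct_map inj_on_def Q_def)

lemma LC_dist: "distinct (L @ Cl)"
  using L_dist Cl_dist L_set by (auto simp: Q_def)

lemma r1_Cl: "r1 \<in> set Cl" using r1_last Cl_ne by simp

lemma pF_follows_TC: "follows pF (Tl @ Cl)"
proof (rule follows_cong[OF follows_TC])
  fix i assume i: "Suc i < length (Tl @ Cl)"
  let ?x = "(Tl @ Cl)!i"
  have "?x \<in> set (Tl @ Cl)" using i by (intro nth_mem) simp
  then have xV: "?x \<in> VV" using Tl_V Cl_V by auto
  have "?x \<noteq> r1"
  proof
    assume "?x = r1"
    moreover have "r1 = last (Tl @ Cl)" using r1_last Cl_ne by simp
    moreover have "last (Tl @ Cl) = (Tl @ Cl) ! (length (Tl @ Cl) - 1)" using Cl_ne last_conv_nth[of "Tl @ Cl"] by simp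
    ultimately have "?x = (Tl @ Cl) ! (length (Tl @ Cl) - 1)" by simp
    moreover have "length Cl \<ge> 1" using Cl_len m1 by simp
    ultimately show False using TC_dist i nth_eq_iff_index_eq[OF TC_dist, of i "length (Tl @ Cl) - 1"] by simp
  qed
  moreover have "?x \<notin> Q" using \<open>?x \<in> set (Tl @ Cl)\<close> Tl_notper by (auto simp: Q_def Pset_def)
  ultimately show "pF ?x = f ?x" using xV by (simp add: pF_def)
qed

lemma pF_r1: "pF r1 = r1" using r1_Cl Cl_V by (auto simp: pF_def)

lemma pF_follows_LC: "follows pF (L @ Cl)"
proof -
  have "follows pF L"
  proof (rule follows_cong[OF follows_nxt[OF L_dist, of c0]])
    fix i assume i: "Suc i < length L"
    then have "L!i \<in> Q" using L_set by (metis nth_mem Suc_lessD)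
    moreover have "r1 \<notin> Q" using r1_Cl by (simp add: Q_def)
    ultimately show "pF (L!i) = nxt L c0 (L!i)" using Q_V by (auto simp: pF_def)
  qed
  moreover have "follows pF Cl"
  proof -
    have "follows pF (Tl @ Cl)" by (rule pF_follows_TC)
    then show ?thesis using follows_append by blast
  qed
  moreover have "pF (last L) = hd Cl" if "L \<noteq> []"
  proof -
    have "last L \<in> Q" using that L_set by (metis last_in_set)
    moreover have "r1 \<notin> Q" using r1_Cl by (simp add: Q_def)
    ultimately have "pF (last L) = nxt L c0 (last L)" using Q_V by (auto simp: pF_def)
    then show ?thesis using nxt_last[OF L_dist that] hd_Cl by simp
  qed
  ultimately show ?thesis using follows_append by blast
qed

lemma orb_a: "orbf pF a = set (Tl @ Cl)"
  using follows_orb[OF pF_follows_TC] Cl_ne hd_TC r1_last pF_r1 by simp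

lemma Pset_LC: "Pset = set (L @ Cl)"
  using L_set Cl_per by (auto simp: Q_def)

lemma orb_r3: "orbf pF r3 = Pset"
  using follows_orb[OF pF_follows_LC] Cl_ne r1_last pF_r1 Pset_LC by (simp add: r3_def)

lemma orbit_tail_eq: "orbit_tail f (Suc n) = set (Tl @ Cl)"
proof -
  have ot: "orbit_tail f (Suc n) = range (\<lambda>k. (f^^k) a)"
  proof
    show "orbit_tail f (Suc n) \<subseteq> range (\<lambda>k. (f^^k) a)"
    proof
      fix x assume "x \<in> orbit_tail f (Suc n)"
      then obtain k where k: "k \<ge> 1" "x = (f^^k) (Suc n)" unfolding orbit_tail_def by auto
      then have "x = (f^^(k-1)) a" unfolding a_def using fpS[where g=f and a="k-1" and x="Suc n"] by simp
      then show "x \<in> range (\<lambda>k. (f^^k) a)" by simp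
    qed
    show "range (\<lambda>k. (f^^k) a) \<subseteq> orbit_tail f (Suc n)"
    proof
      fix x assume "x \<in> range (\<lambda>k. (f^^k) a)"
      then obtain k where "x = (f^^k) a" by auto
      then have "x = (f^^(Suc k)) (Suc n)" unfolding a_def using fpS[where g=f and a=k and x="Suc n"] by simp
      then show "x \<in> orbit_tail f (Suc n)" unfolding orbit_tail_def by (intro CollectI exI[of _ "Suc k"]) simp
    qed
  qed
  have "range (\<lambda>k. (f^^k) a) = set (Tl @ Cl)"
  proof
    show "range (\<lambda>k. (f^^k) a) \<subseteq> set (Tl @ Cl)"
    proof
      fix x assume "x \<in> range (\<lambda>k. (f^^k) a)"
      then obtain k where k: "x = (f^^k) a" by auto
      show "x \<in> set (Tl @ Cl)"
      proof (cases "k < t")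
        case True then show ?thesis using k by (auto simp: Tl_def)
      next
        case False
        then have "x = (f^^(k - t)) c0" using k fpa[where g=f and a="k-t" and b=t and x=a] by (simp add: c0_def)
        also have "\<dots> = (f^^((k - t) mod m)) c0" using pow_mod[OF c0_per] by (simp add: m_def)
        finally show ?thesis using m1 by (auto simp: Cl_def)
      qed
    qed
    show "set (Tl @ Cl) \<subseteq> range (\<lambda>k. (f^^k) a)"
    proof
      fix x assume "x \<in> set (Tl @ Cl)"
      then consider "x \<in> set Tl" | "x \<in> set Cl" by auto
      then show "x \<in> range (\<lambda>k. (f^^k) a)"
      proof cases
        case 1 then show ?thesis by (auto simp: Tl_def)
      next
        case 2
        then obtain i where "x = (f^^i) c0" by (auto simp: Cl_def)
        then have "x = (f^^(i + t)) a" using fpa[where g=f and a=i and b=t and x=a] by (simp add: c0_def)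
        then show ?thesis by simp
      qed
    qed
  qed
  then show ?thesis using ot by simp
qed

end


context fdyn begin

lemma r1V: "r1 \<in> VV" using r1_Cl Cl_V by auto
lemma r3V: "r3 \<in> VV"
proof -
  have "r3 \<in> set (L @ Cl)" using Cl_ne unfolding r3_def by (intro hd_in_set) simp
  then show ?thesis using Pset_LC by (auto simp: Pset_def)
qed

lemma pF_V: "x \<in> VV \<Longrightarrow> pF x \<in> VV"
proof -
  assume x: "x \<in> VV"
  have "nxt L c0 x \<in> VV" if "x \<in> Q" using nxt_in[OF L_dist, of x c0] that L_set Q_V c0V by auto
  then show ?thesis using x r1V fV' by (auto simp: pF_def)
qed

lemma pF_PiE: "pF \<in> VV \<rightarrow>\<^sub>E VV"
proof (rule PiE_I)
  show "pF x \<in> VV" if "x \<in> VV" for x using pF_V that .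
  show "pF x = undefined" if "x \<notin> VV" for x using that unfolding pF_def by (simp only: if_False)
qed

lemma pF_np: "(\<forall>j<k. \<not> per ((f^^j) v)) \<Longrightarrow> v \<in> VV \<Longrightarrow> (pF^^k) v = (f^^k) v"
proof (induction k)
  case 0 then show ?case by simp
next
  case (Suc k)
  then have IH: "(pF^^k) v = (f^^k) v" by simp
  let ?x = "(f^^k) v"
  have "\<not> per ?x" using Suc(2) by simp
  moreover have "?x \<in> VV" using powV[OF Suc(3)] .
  moreover have "r1 \<in> Pset" using r1_Cl Cl_per by blast
  ultimately have "pF ?x = f ?x" by (auto simp: pF_def Q_def Pset_def)
  then show ?case using IH by simp
qed

lemma reach: assumes "v \<in> VV" shows "\<exists>k. (pF^^k) v = r1"
proof -
  have lr: "last (L @ Cl) = r1" using r1_last Cl_ne by simp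
  have inP: "\<exists>k. (pF^^k) x = r1" if "x \<in> Pset" for x
    using follows_reach[OF pF_follows_LC, of x] that Pset_LC lr by simp
  obtain k0 where k0: "per ((f^^k0) v)" "\<forall>j<k0. \<not> per ((f^^j) v)"
  proof -
    let ?k = "LEAST k. per ((f^^k) v)"
    have "per ((f^^?k) v)" using ev_per[OF assms] by (rule LeastI_ex)
    moreover have "\<forall>j<?k. \<not> per ((f^^j) v)" using not_less_Least by blast
    ultimately show ?thesis using that by blast
  qed
  have "(pF^^k0) v = (f^^k0) v" using pF_np[OF k0(2) assms] .
  moreover have "(f^^k0) v \<in> Pset" using k0(1) powV[OF assms] by (simp add: Pset_def)
  ultimately have "(pF^^k0) v \<in> Pset" by simp
  then obtain k where "(pF^^k) ((pF^^k0) v) = r1" using inP by blast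
  then have "(pF^^(k + k0)) v = r1" by (simp add: fpa)
  then show ?thesis by blast
qed

lemma pfun_pF: "pfun VV r1 pF"
  unfolding pfun_def using r1V pF_V pF_r1 reach by blast

end

definition FF :: "nat \<Rightarrow> (nat \<Rightarrow> nat) \<Rightarrow> ((nat \<Rightarrow> nat) \<times> nat \<times> nat \<times> nat)" where
  "FF n f = (fdyn.pF n f, fdyn.r1 n f, f (Suc n), fdyn.r3 n f)"

lemma FF_PR: "f \<in> funs n \<Longrightarrow> FF n f \<in> PR n"
proof -
  assume "f \<in> funs n"
  then interpret fdyn n f by unfold_locales
  show ?thesis unfolding FF_def PR_def using pF_PiE r1V aV r3V pfun_pF by (simp add: a_def)
qed

lemma FF_props: "f \<in> funs n \<Longrightarrow> FF n f = (p, r1, r2, r3) \<Longrightarrow>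
   orbit_tail f (n + 1) = orbf p r2 \<and> periodic_points n f = orbf p r3"
proof -
  assume "f \<in> funs n" "FF n f = (p, r1, r2, r3)"
  then interpret fdyn n f by unfold_locales
  show ?thesis using \<open>FF n f = (p, r1, r2, r3)\<close> orbit_tail_eq orb_a orb_r3 pp
    by (auto simp: FF_def a_def)
qed



definition chn :: "nat \<Rightarrow> (nat \<Rightarrow> nat) \<Rightarrow> nat \<Rightarrow> nat list" where
  "chn r p v = map (\<lambda>i. (p^^i) v) [0..<Suc (LEAST k. (p^^k) v = r)]"

context pfun begin

lemma chain_chn: "chain v = chn r p v"
  unfolding chain_def depth_def chn_def ..

lemma chain_follows: "follows p (chain v)"
  unfolding follows_def chain_len using chain_nth by simp

lemma chain_V: "v \<in> V \<Longrightarrow> set (chain v) \<subseteq> V"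
  using orb_chain orb_V by blast

lemma chain_drop: assumes "v \<in> V" "i \<le> depth v" shows "drop i (chain v) = chain ((p^^i) v)"
proof (rule nth_equalityI)
  have d: "depth ((p^^i) v) = depth v - i" using depth_pow[OF assms] .
  show "length (drop i (chain v)) = length (chain ((p^^i) v))" using d assms(2) by (simp add: chain_len)
  fix j assume "j < length (drop i (chain v))"
  then have j: "i + j \<le> depth v" by (simp add: chain_len)
  have "drop i (chain v) ! j = chain v ! (i + j)" using j chain_len[of v] by (simp add: nth_drop)
  also have "\<dots> = (p^^(i+j)) v" using j chain_nth by simp
  also have "\<dots> = (p^^j) ((p^^i) v)" by (simp add: fpa add.commute)
  also have "\<dots> = chain ((p^^i) v) ! j" using j d chain_nth by simp
  finally show "drop i (chain v) ! j = chain ((p^^i) v) ! j" .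
qed

lemma chain_suffix: assumes "v \<in> V" "x \<in> set (chain v)" shows "\<exists>xs. chain v = xs @ chain x"
proof -
  obtain i where i: "i < length (chain v)" "x = chain v ! i" using assms(2) by (auto simp: in_set_conv_nth)
  then have i': "i \<le> depth v" "x = (p^^i) v" using chain_nth chain_len by auto
  have "chain v = take i (chain v) @ drop i (chain v)" by simp
  then show ?thesis using chain_drop[OF assms(1) i'(1)] i'(2) by metis
qed

lemma chain_suffix2: assumes "v \<in> V" "chain v = xs @ ys" "ys \<noteq> []" shows "ys = chain (hd ys)"
proof -
  have l: "length xs \<le> depth v" using assms(2,3) chain_len[of v] by (cases ys) auto
  have "ys = drop (length xs) (chain v)" using assms(2) by simp
  also have "\<dots> = chain ((p^^length xs) v)" using chain_drop[OF assms(1) l] .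
  finally have ys: "ys = chain ((p^^length xs) v)" .
  then have "hd ys = (p^^length xs) v" using chain_hd by simp
  then show ?thesis using ys by simp
qed

lemma chain_unique:
  assumes "follows p xs" "distinct xs" "xs \<noteq> []" "last xs = r" "hd xs \<in> V"
  shows "chain (hd xs) = xs"
proof -
  let ?v = "hd xs"
  have hx: "hd xs = xs!0" using assms(3) by (simp add: hd_conv_nth)
  have pw: "(p^^i) ?v = xs!i" if "i < length xs" for i using follows_pow0[OF assms(1) that] hx by simp
  have lx: "last xs = xs!(length xs - 1)" using assms(3) by (simp add: last_conv_nth)
  have "(p^^(length xs - 1)) ?v = r" using pw[of "length xs - 1"] assms(3,4) lx by simp
  then have d1: "depth ?v \<le> length xs - 1" by (rule depth_least)
  have "depth ?v = length xs - 1"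
  proof (rule ccontr)
    assume "depth ?v \<noteq> length xs - 1"
    then have lt: "depth ?v < length xs - 1" using d1 by simp
    have "xs!(depth ?v) = r" using pw[of "depth ?v"] lt depth_r[OF assms(5)] by simp
    also have "r = xs!(length xs - 1)" using assms(4) lx by simp
    finally have "xs!(depth ?v) = xs!(length xs - 1)" .
    moreover have "length xs - 1 < length xs" using assms(3) by simp
    ultimately show False using nth_eq_iff_index_eq[OF assms(2), of "depth ?v" "length xs - 1"] lt by simp
  qed
  then have len: "length (chain ?v) = length xs" using chain_len assms(3) by (cases xs) auto
  show ?thesis
  proof (rule nth_equalityI)
    show "length (chain ?v) = length xs" by (rule len)
    fix i assume "i < length (chain ?v)"
    then show "chain ?v ! i = xs ! i" using chain_nth[of i ?v] pw[of i] len chain_len[of ?v] by simp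
  qed
qed

lemma chain_only_r: assumes "x \<in> V" "(p^^j) x = x" "j \<ge> 1" shows "x = r"
proof (rule ccontr)
  assume ne: "x \<noteq> r"
  then have d1: "depth x \<ge> 1" using depth0[OF assms(1)] by simp
  show False
  proof (cases "j \<le> depth x")
    case True
    then have "depth x = depth x - j" using depth_pow[OF assms(1) True] assms(2) by simp
    then show False using d1 True assms(3) by simp
  next
    case False
    then have "(p^^j) x = r" using pow_ge[OF assms(1)] by simp
    then show False using assms(2) ne by simp
  qed
qed

end


definition gLp :: "nat \<Rightarrow> (nat \<Rightarrow> nat) \<Rightarrow> nat \<Rightarrow> nat \<Rightarrow> nat list" where
  "gLp r1 p r2 r3 = takeWhile (\<lambda>x. x \<notin> set (chn r1 p r2)) (chn r1 p r3)"
definition gD :: "nat \<Rightarrow> (nat \<Rightarrow> nat) \<Rightarrow> nat \<Rightarrow> nat \<Rightarrow> nat list" where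
  "gD r1 p r2 r3 = dropWhile (\<lambda>x. x \<notin> set (chn r1 p r2)) (chn r1 p r3)"

definition GG :: "nat \<Rightarrow> ((nat \<Rightarrow> nat) \<times> nat \<times> nat \<times> nat) \<Rightarrow> (nat \<Rightarrow> nat)" where
  "GG n = (\<lambda>(p, r1, r2, r3). (\<lambda>x. if x = Suc n then r2 else if x = r1 then hd (gD r1 p r2 r3)
     else if x \<in> set (gLp r1 p r2 r3)
       then the (map_of (zip (sorted_list_of_set (set (gLp r1 p r2 r3))) (gLp r1 p r2 r3)) x)
     else if x \<in> {1..n} then p x else undefined))"

context fdyn begin

lemma chn_a: "chn r1 pF a = Tl @ Cl"
proof -
  interpret P: pfun VV r1 pF by (rule pfun_pF)
  have "P.chain (hd (Tl @ Cl)) = Tl @ Cl"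
    using P.chain_unique[OF pF_follows_TC TC_dist] Cl_ne r1_last hd_TC aV by simp
  then show ?thesis using hd_TC P.chain_chn by simp
qed

lemma chn_r3: "chn r1 pF r3 = L @ Cl"
proof -
  interpret P: pfun VV r1 pF by (rule pfun_pF)
  have "P.chain (hd (L @ Cl)) = L @ Cl"
    using P.chain_unique[OF pF_follows_LC LC_dist] Cl_ne r1_last r3V by (simp add: r3_def)
  then show ?thesis using P.chain_chn by (simp add: r3_def)
qed

lemma L_notin: "x \<in> set L \<Longrightarrow> x \<notin> set (Tl @ Cl)"
  using L_set Tl_notper by (auto simp: Q_def Pset_def)

lemma gLp_eq: "gLp r1 pF a r3 = L"
proof -
  have "takeWhile (\<lambda>x. x \<notin> set (Tl @ Cl)) (L @ Cl) = L @ takeWhile (\<lambda>x. x \<notin> set (Tl @ Cl)) Cl"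
    using L_notin by (intro takeWhile_append2) blast
  moreover have "takeWhile (\<lambda>x. x \<notin> set (Tl @ Cl)) Cl = []"
    using Cl_ne by (cases Cl) auto
  ultimately show ?thesis unfolding gLp_def chn_a chn_r3 by simp
qed

lemma gD_eq: "gD r1 pF a r3 = Cl"
proof -
  have "dropWhile (\<lambda>x. x \<notin> set (Tl @ Cl)) (L @ Cl) = dropWhile (\<lambda>x. x \<notin> set (Tl @ Cl)) Cl"
    using L_notin by (intro dropWhile_append2) blast
  moreover have "dropWhile (\<lambda>x. x \<notin> set (Tl @ Cl)) Cl = Cl"
    using Cl_ne by (cases Cl) auto
  ultimately show ?thesis unfolding gD_def chn_a chn_r3 by simp
qed

lemma GG_FF: "GG n (FF n f) = f"
proof
  fix x
  have sQ: "sorted_list_of_set (set L) = qs" using L_set by (simp add: qs_def)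
  have mo: "map_of (zip qs L) x = Some (f x)" if "x \<in> Q" using that qs_set
    by (simp add: L_def map_of_zip_map)
  have r1n: "r1 \<noteq> Suc n" using r1V by auto
  have GGx: "GG n (FF n f) x = (if x = Suc n then a else if x = r1 then c0
     else if x \<in> Q then f x else if x \<in> VV then pF x else undefined)"
    unfolding GG_def FF_def using gLp_eq gD_eq hd_Cl sQ mo L_set by (simp add: a_def)
  show "GG n (FF n f) x = f x"
  proof -
    consider "x = Suc n" | "x \<noteq> Suc n" "x = r1" | "x \<noteq> Suc n" "x \<noteq> r1" "x \<in> Q"
      | "x \<noteq> Suc n" "x \<noteq> r1" "x \<notin> Q" "x \<in> VV" | "x \<noteq> Suc n" "x \<notin> VV" "x \<noteq> r1" "x \<notin> Q" using r1V Q_V by blast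
    then show ?thesis
    proof cases
      case 1 then show ?thesis using GGx by (simp add: a_def)
    next
      case 2 then show ?thesis using GGx f_r1 by simp
    next
      case 3 then show ?thesis using GGx by simp
    next
      case 4 then show ?thesis using GGx by (simp add: pF_def)
    next
      case 5
      then have "x \<notin> {1..Suc n}" by auto
      moreover have "GG n (FF n f) x = undefined" using GGx 5 by (simp only: if_False if_not_P)
      ultimately show ?thesis using fext by simp
    qed
  qed
qed

end


locale gdyn =
  fixes n :: nat and r1 :: nat and p :: "nat \<Rightarrow> nat" and r2 r3 :: nat
  assumes prm: "(p, r1, r2, r3) \<in> PR n"

sublocale gdyn \<subseteq> P: pfun "{1..n}" r1 p
  using prm by (simp add: PR_def)

context gdyn begin

abbreviation VV where "VV \<equiv> {1..n}"
abbreviation A where "A \<equiv> P.chain r2"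
abbreviation B where "B \<equiv> P.chain r3"
abbreviation Lp where "Lp \<equiv> gLp r1 p r2 r3"
abbreviation Dl where "Dl \<equiv> gD r1 p r2 r3"
abbreviation c where "c \<equiv> hd Dl"
abbreviation Qs where "Qs \<equiv> sorted_list_of_set (set Lp)"
abbreviation g where "g \<equiv> GG n (p, r1, r2, r3)"

lemma pPiE: "p \<in> VV \<rightarrow>\<^sub>E VV" and r1V: "r1 \<in> VV" and r2V: "r2 \<in> VV" and r3V: "r3 \<in> VV"
  using prm by (auto simp: PR_def)

lemma k1: "B = Lp @ Dl"
  unfolding gLp_def gD_def P.chain_chn by simp

lemma r1A: "r1 \<in> set A" using P.chain_last[OF r2V] P.chain_ne[of r2] by (metis last_in_set)
lemma r1B: "r1 \<in> set B" using P.chain_last[OF r3V] P.chain_ne[of r3] by (metis last_in_set)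

lemma k3: "Dl \<noteq> []"
proof
  assume "Dl = []"
  then have "\<forall>x\<in>set B. x \<notin> set A" unfolding gD_def P.chain_chn[symmetric] by (simp add: dropWhile_eq_Nil_conv)
  then show False using r1A r1B by blast
qed

lemma k4: "c \<in> set A"
  using hd_dropWhile[of "\<lambda>x. x \<notin> set A" B] k3 unfolding gD_def P.chain_chn by simp

lemma AV: "set A \<subseteq> VV" using P.chain_V[OF r2V] .
lemma BV: "set B \<subseteq> VV" using P.chain_V[OF r3V] .
lemma cV: "c \<in> VV" using k4 AV by blast

lemma k5: "Dl = P.chain c"
  using P.chain_suffix2[OF r3V k1 k3] .

lemma k6: "\<exists>A1. A = A1 @ Dl"
  using P.chain_suffix[OF r2V k4] k5 by simp

definition A1 where "A1 = (SOME A1. A = A1 @ Dl)"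
lemma A_eq: "A = A1 @ Dl" unfolding A1_def using k6 by (rule someI_ex)

lemma distA: "distinct A" using P.chain_distinct[OF r2V] .
lemma distB: "distinct B" using P.chain_distinct[OF r3V] .
lemma distLp: "distinct Lp" using distB k1 by (metis distinct_append)
lemma distDl: "distinct Dl" using distB k1 by (metis distinct_append)

lemma k8: "x \<in> set Lp \<Longrightarrow> x \<notin> set A"
  unfolding gLp_def P.chain_chn[symmetric] by (auto dest: set_takeWhileD)

lemma k9: "x \<in> set A1 \<Longrightarrow> x \<notin> set B"
proof
  assume x: "x \<in> set A1" "x \<in> set B"
  have "x \<notin> set Dl" using distA A_eq x(1) by auto
  moreover have "x \<notin> set Lp" using k8 A_eq x(1) by auto
  ultimately show False using x(2) k1 by simp
qed

lemma LpDl: "set Lp \<inter> set Dl = {}" using distB k1 by (metis distinct_append)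

lemma k10: "last Dl = r1" using k5 P.chain_last[OF cV] by simp

lemma r1_notLp: "r1 \<notin> set Lp" using k8 r1A by blast
lemma LpV: "set Lp \<subseteq> VV" using BV k1 by auto
lemma DlV: "set Dl \<subseteq> VV" using BV k1 by auto

lemma g_N: "g (Suc n) = r2" by (simp add: GG_def)
lemma g_r1: "g r1 = c" using r1V by (simp add: GG_def)
lemma g_Lp: "x \<in> set Lp \<Longrightarrow> g x = the (map_of (zip Qs Lp) x)"
  using LpV r1_notLp by (auto simp: GG_def)
lemma g_p: "x \<in> VV \<Longrightarrow> x \<noteq> r1 \<Longrightarrow> x \<notin> set Lp \<Longrightarrow> g x = p x"
  by (auto simp: GG_def)
lemma g_out: "x \<notin> {1..Suc n} \<Longrightarrow> g x = undefined"
  using r1V LpV by (auto simp: GG_def)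

lemma Qs_set: "set Qs = set Lp" by simp
lemma Qs_dist: "distinct Qs" by simp
lemma Qs_len: "length Qs = length Lp" using distLp by (simp add: distinct_card)

lemma g_Qs: "i < length Lp \<Longrightarrow> g (Qs!i) = Lp!i"
proof -
  assume i: "i < length Lp"
  have "Qs!i \<in> set Lp" using i Qs_len by (metis nth_mem Qs_set)
  then have "g (Qs!i) = the (map_of (zip Qs Lp) (Qs!i))" by (rule g_Lp)
  also have "map_of (zip Qs Lp) (Qs!i) = Some (Lp!i)" using map_of_zip_nth[OF Qs_len Qs_dist i] .
  finally show ?thesis by simp
qed

lemma gS: "g ` set Lp = set Lp"
proof -
  have sc: "set xs = (\<lambda>i. xs!i) ` {0..<length xs}" for xs :: "nat list" using nth_image[of "length xs" xs] by simp
  have "set Lp = (\<lambda>i. Qs!i) ` {0..<length Lp}" using Qs_len sc[of Qs] Qs_set by simp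
  then have "g ` set Lp = g ` ((\<lambda>i. Qs!i) ` {0..<length Lp})" by simp
  also have "\<dots> = (\<lambda>i. g (Qs!i)) ` {0..<length Lp}" by (simp add: image_image)
  also have "\<dots> = (\<lambda>i. Lp!i) ` {0..<length Lp}" using g_Qs by auto
  also have "\<dots> = set Lp" using sc[of Lp] by simp
  finally show ?thesis .
qed

lemma g_inj: "inj_on g (set Lp)"
  using gS by (intro eq_card_imp_inj_on) auto

lemma g_funs: "g \<in> funs n"
  unfolding funs_def
proof (rule PiE_I)
  fix x assume x: "x \<in> {1..n+1}"
  show "g x \<in> VV"
  proof -
    consider "x = Suc n" | "x \<noteq> Suc n" "x = r1" | "x \<noteq> Suc n" "x \<noteq> r1" "x \<in> set Lp"
      | "x \<noteq> Suc n" "x \<noteq> r1" "x \<notin> set Lp" by blast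
    then show ?thesis
    proof cases
      case 1 then show ?thesis using g_N r2V by simp
    next
      case 2 then show ?thesis using g_r1 cV by simp
    next
      case 3 then show ?thesis using gS LpV by blast
    next
      case 4
      then have "x \<in> VV" using x by auto
      then show ?thesis using g_p[OF _ 4(2,3)] P.pV by simp
    qed
  qed
next
  fix x assume "x \<notin> {1..n+1}"
  then show "g x = undefined" using g_out by simp
qed

end

sublocale gdyn \<subseteq> G: fdyn n g
  by unfold_locales (rule g_funs)



context gdyn begin

lemma hdA: "hd A = r2" by (rule P.chain_hd)
lemma A_ne: "A \<noteq> []" by (rule P.chain_ne)

lemma lastA: "last A = r1" using P.chain_last[OF r2V] .
lemma A_len: "length A \<ge> 1" using A_ne by (cases A) auto
lemma Dl_len: "length Dl \<ge> 1" using k3 by (cases Dl) auto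

lemma g_follows_A: "follows g A"
proof (rule follows_cong[OF P.chain_follows])
  fix i assume i: "Suc i < length A"
  have xA: "A!i \<in> set A" using i by (intro nth_mem) simp
  have "A!i \<noteq> r1"
  proof
    assume "A!i = r1"
    moreover have "r1 = A!(length A - 1)" using lastA A_ne by (simp add: last_conv_nth)
    moreover have "length A - 1 < length A" using A_len by simp
    ultimately have "i = length A - 1" using nth_eq_iff_index_eq[OF distA, of i "length A - 1"] i by simp
    then show False using i by linarith
  qed
  moreover have "A!i \<notin> set Lp" using k8 xA by blast
  ultimately show "g (A!i) = p (A!i)" using g_p xA AV by blast
qed

lemma g_follows_Dl: "follows g Dl"
  using g_follows_A A_eq follows_append by metis

lemma Dl_nth_pow: "i < length Dl \<Longrightarrow> (g^^i) c = Dl!i"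
  using follows_pow0[OF g_follows_Dl] k3 by (simp add: hd_conv_nth)

lemma g_cycle: "(g^^length Dl) c = c"
proof -
  have "(g^^(length Dl - 1)) c = Dl!(length Dl - 1)" using Dl_nth_pow k3 by simp
  also have "\<dots> = r1" using k10 k3 by (simp add: last_conv_nth)
  finally have "(g^^(Suc (length Dl - 1))) c = g r1" by simp
  then show ?thesis using g_r1 k3 by simp
qed

lemma c_per: "G.per c"
  unfolding G.per_def using g_cycle Dl_len by (intro exI[of _ "length Dl"]) auto

lemma Dl_per: "x \<in> set Dl \<Longrightarrow> G.per x"
proof -
  assume "x \<in> set Dl"
  then obtain i where "i < length Dl" "x = Dl!i" by (auto simp: in_set_conv_nth)
  then have "x = (g^^i) c" using Dl_nth_pow by simp
  then show ?thesis using G.per_pow[OF c_per] by simp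
qed

lemma Lp_per: assumes x: "x \<in> set Lp" shows "G.per x"
proof (rule ccontr)
  assume nx: "\<not> G.per x"
  define P' where "P' = {z \<in> set Lp. G.per z}"
  have P'sub: "P' \<subseteq> set Lp" by (auto simp: P'_def)
  have "g ` P' \<subseteq> P'" using gS G.per_f by (auto simp: P'_def)
  moreover have "inj_on g P'" using g_inj P'sub by (rule inj_on_subset)
  ultimately have gP': "g ` P' = P'" using finite_subset[OF P'sub] by (intro endo_inj_surj) auto
  have step: "g y \<in> set Lp - P'" if "y \<in> set Lp - P'" for y
  proof -
    have "g y \<in> set Lp" using that gS by blast
    moreover have "g y \<notin> P'"
    proof
      assume "g y \<in> P'"
      then obtain z where "z \<in> P'" "g z = g y" using gP' by (metis imageE)
      then have "z = y" using g_inj P'sub that by (auto simp: inj_on_def)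
      then show False using \<open>z \<in> P'\<close> that by simp
    qed
    ultimately show ?thesis by simp
  qed
  have all: "(g^^k) x \<in> set Lp - P'" for k
  proof (induction k)
    case 0 then show ?case using x nx by (simp add: P'_def)
  next
    case (Suc k) then show ?case using step by simp
  qed
  obtain k where "G.per ((g^^k) x)" using G.ev_per x LpV by blast
  then show False using all[of k] by (auto simp: P'_def)
qed

lemma B_closed: "y \<in> set B \<Longrightarrow> g y \<in> set B"
proof -
  assume y: "y \<in> set B"
  then consider "y \<in> set Lp" | "y \<in> set Dl" using k1 by auto
  then show "g y \<in> set B"
  proof cases
    case 1 then show ?thesis using gS k1 by auto
  next
    case 2
    then obtain i where i: "i < length Dl" "y = Dl!i" by (auto simp: in_set_conv_nth)
    show ?thesis
    proof (cases "Suc i < length Dl")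
      case True
      then have "g y = Dl!Suc i" using g_follows_Dl i unfolding follows_def by simp
      then show ?thesis using True k1 by simp
    next
      case False
      then have "i = length Dl - 1" using i by linarith
      then have "y = last Dl" using i k3 by (simp add: last_conv_nth)
      then have "g y = c" using k10 g_r1 by simp
      then show ?thesis using k3 k1 by simp
    qed
  qed
qed

lemma B_pow: "y \<in> set B \<Longrightarrow> (g^^k) y \<in> set B"
  by (induction k) (auto simp: B_closed)

lemma notB_pow: "x \<in> VV \<Longrightarrow> (\<forall>i<k. (g^^i) x \<notin> set B) \<Longrightarrow> (g^^k) x = (p^^k) x"
proof (induction k)
  case 0 then show ?case by simp
next
  case (Suc k)
  then have IH: "(g^^k) x = (p^^k) x" by simp
  have nb: "(g^^k) x \<notin> set B" using Suc(3) by simp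
  have "(p^^k) x \<in> VV" using P.pow_V[OF Suc(2)] .
  moreover have "(p^^k) x \<noteq> r1" using nb IH r1B by auto
  moreover have "(p^^k) x \<notin> set Lp" using nb IH k1 by auto
  ultimately have "g ((p^^k) x) = p ((p^^k) x)" using g_p by blast
  then show ?case using IH by simp
qed

lemma notB_notper: assumes "x \<in> VV" "x \<notin> set B" shows "\<not> G.per x"
proof
  assume "G.per x"
  then obtain j where j: "j \<ge> 1" "(g^^j) x = x" unfolding G.per_def by auto
  show False
  proof (cases "\<exists>k\<le>j. (g^^k) x \<in> set B")
    case True
    then obtain k where k: "k \<le> j" "(g^^k) x \<in> set B" by blast
    have "(g^^(j - k)) ((g^^k) x) \<in> set B" using B_pow[OF k(2)] .
    then have "(g^^j) x \<in> set B" using k(1) by (simp add: fpa)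
    then show False using j assms by simp
  next
    case False
    then have "(g^^j) x = (p^^j) x" using notB_pow[OF assms(1)] by auto
    then have "x = r1" using P.chain_only_r[OF assms(1) _ j(1)] j by simp
    then show False using r1B assms by simp
  qed
qed

lemma Pset_g: "G.Pset = set B"
proof
  show "G.Pset \<subseteq> set B" using notB_notper by (auto simp: G.Pset_def)
  show "set B \<subseteq> G.Pset" using Lp_per Dl_per k1 BV by (auto simp: G.Pset_def)
qed

end


context gdyn begin

lemma a_g: "G.a = r2" unfolding G.a_def using g_N .

lemma A_nth_pow: "i < length A \<Longrightarrow> (g^^i) r2 = A!i"
  using follows_pow0[OF g_follows_A] A_ne hdA by (simp add: hd_conv_nth[symmetric])

lemma t_g: "G.t = length A1"
proof -
  have lt: "length A1 < length A" using A_eq k3 by simp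
  have perA: "G.per (A!k) \<longleftrightarrow> A!k \<in> set B" if "k < length A" for k
  proof -
    have "A!k \<in> VV" using AV that by (meson nth_mem subsetD)
    then show ?thesis using Pset_g by (auto simp: G.Pset_def)
  qed
  show ?thesis unfolding G.t_def a_g
  proof (rule Least_equality)
    have "A ! length A1 = c" using A_eq k3 by (simp add: nth_append hd_conv_nth)
    then show "G.per ((g^^length A1) r2)" using A_nth_pow[OF lt] Dl_per k3 by simp
  next
    fix k assume k: "G.per ((g^^k) r2)"
    show "length A1 \<le> k"
    proof (rule ccontr)
      assume "\<not> length A1 \<le> k"
      then have kl: "k < length A1" by simp
      then have "A!k = A1!k" using A_eq by (simp add: nth_append)
      then have "A!k \<notin> set B" using k9 kl by simp
      then show False using k perA A_nth_pow kl lt by simp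
    qed
  qed
qed

lemma c0_g: "G.c0 = c"
proof -
  have "A ! length A1 = c" using A_eq k3 by (simp add: nth_append hd_conv_nth)
  moreover have "length A1 < length A" using A_eq k3 by simp
  ultimately show ?thesis unfolding G.c0_def t_g a_g using A_nth_pow by simp
qed

lemma m_g: "G.m = length Dl"
  unfolding G.m_def G.prd_def c0_g
proof (rule Least_equality)
  show "1 \<le> length Dl \<and> (g^^length Dl) c = c" using Dl_len g_cycle by simp
next
  fix k assume k: "1 \<le> k \<and> (g^^k) c = c"
  show "length Dl \<le> k"
  proof (rule ccontr)
    assume "\<not> length Dl \<le> k"
    then have "Dl!k = Dl!0" using k Dl_nth_pow[of k] Dl_nth_pow[of 0] k3 by simp
    then show False using nth_eq_iff_index_eq[OF distDl, of k 0] k \<open>\<not> length Dl \<le> k\<close> k3 by simp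
  qed
qed

lemma Cl_g: "G.Cl = Dl"
proof (rule nth_equalityI)
  show "length G.Cl = length Dl" using G.Cl_len m_g by simp
  fix i assume "i < length G.Cl"
  then have i: "i < length Dl" using G.Cl_len m_g by simp
  then show "G.Cl ! i = Dl ! i" using G.Cl_nth[of i] m_g c0_g Dl_nth_pow by simp
qed

lemma r1_g: "G.r1 = r1" using G.r1_last Cl_g k10 by simp

lemma Q_g: "G.Q = set Lp"
  unfolding G.Q_def Pset_g Cl_g using k1 LpDl by auto

lemma L_g: "G.L = Lp"
proof (rule nth_equalityI)
  show "length G.L = length Lp" unfolding G.L_def G.qs_def Q_g using Qs_len by simp
  fix i assume "i < length G.L"
  then have i: "i < length Lp" unfolding G.L_def G.qs_def Q_g using Qs_len by simp
  then show "G.L ! i = Lp ! i" unfolding G.L_def G.qs_def Q_g using g_Qs Qs_len by simp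
qed

lemma r3_g: "G.r3 = r3"
  unfolding G.r3_def L_g Cl_g using k1[symmetric] P.chain_hd[of r3] by simp

lemma pF_g: "G.pF = p"
proof
  fix x
  show "G.pF x = p x"
  proof (cases "x \<in> VV")
    case False
    then show ?thesis using pPiE by (auto simp: G.pF_def PiE_def extensional_def)
  next
    case xV: True
    show ?thesis
    proof (cases "x = r1")
      case True then show ?thesis using xV r1_g P.pr by (simp add: G.pF_def)
    next
      case ne: False
      show ?thesis
      proof (cases "x \<in> set Lp")
        case True
        then obtain i where i: "i < length Lp" "x = Lp!i" by (auto simp: in_set_conv_nth)
        have "G.pF x = nxt Lp c x" using xV ne True r1_g Q_g L_g c0_g by (simp add: G.pF_def)
        also have "\<dots> = (if Suc i < length Lp then Lp!Suc i else c)" using nxt_nth[OF distLp i(1)] i by simp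
        also have "\<dots> = B!Suc i" using k1 i(1) k3 by (auto simp: nth_append hd_conv_nth)
        also have "\<dots> = p (B!i)"
        proof -
          have "length B = length Lp + length Dl" using k1 by simp
          then have "Suc i < length B" using i(1) Dl_len by linarith
          then show ?thesis using P.chain_follows[of r3] unfolding follows_def by simp
        qed
        also have "B!i = x" using k1 i by (simp add: nth_append)
        finally show ?thesis .
      next
        case False
        then have "G.pF x = g x" using xV ne r1_g Q_g by (simp add: G.pF_def)
        then show ?thesis using g_p xV ne False by simp
      qed
    qed
  qed
qed

lemma FF_GG: "FF n g = (p, r1, r2, r3)"
  unfolding FF_def using pF_g r1_g g_N r3_g by simp

end

lemma FF_bij: "bij_betw (FF n) (funs n) (PR n)"
proof (rule bij_betw_byWitness[where f'="GG n"])
  show "\<forall>f\<in>funs n. GG n (FF n f) = f" using fdyn.GG_FF by (simp add: fdyn_def)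
  show "\<forall>P\<in>PR n. FF n (GG n P) = P"
  proof
    fix P assume "P \<in> PR n"
    moreover obtain p r1 r2 r3 where "P = (p, r1, r2, r3)" by (cases P) auto
    ultimately show "FF n (GG n P) = P" using gdyn.FF_GG[of n r1 p r2 r3] by (simp add: gdyn_def)
  qed
  show "FF n ` funs n \<subseteq> PR n" using FF_PR by blast
  show "GG n ` PR n \<subseteq> funs n"
  proof
    fix g assume "g \<in> GG n ` PR n"
    then obtain P where P: "P \<in> PR n" "g = GG n P" by blast
    moreover obtain p r1 r2 r3 where "P = (p, r1, r2, r3)" by (cases P) auto
    ultimately show "g \<in> funs n" using gdyn.g_funs[of n r1 p r2 r3] by (simp add: gdyn_def)
  qed
qed

theorem theorem2:
  fixes n :: nat
  assumes "n \<ge> 1"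
  shows "\<exists>\<phi>. bij_betw \<phi> (funs n) (triply_rooted_trees n) \<and>
    (\<forall>f\<in>funs n. case \<phi> f of (E, r1, r2, r3) \<Rightarrow>
        orbit_tail f (n + 1) = ancestors E r1 r2 \<and>
        periodic_points n f = ancestors E r1 r3)"
proof (intro exI conjI)
  show "bij_betw (toT n \<circ> FF n) (funs n) (triply_rooted_trees n)"
    using bij_betw_trans[OF FF_bij part2_bij] .
  show "\<forall>f\<in>funs n. case (toT n \<circ> FF n) f of (E, r1, r2, r3) \<Rightarrow>
        orbit_tail f (n + 1) = ancestors E r1 r2 \<and>
        periodic_points n f = ancestors E r1 r3"
  proof
    fix f assume f: "f \<in> funs n"
    obtain p r1 r2 r3 where P: "FF n f = (p, r1, r2, r3)" by (cases "FF n f") auto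
    have PR: "(p, r1, r2, r3) \<in> PR n" using FF_PR[OF f] P by simp
    then have rV: "r2 \<in> {1..n}" "r3 \<in> {1..n}" by (auto simp: PR_def)
    have props: "orbit_tail f (n + 1) = orbf p r2 \<and> periodic_points n f = orbf p r3"
      using FF_props[OF f P] .
    show "case (toT n \<circ> FF n) f of (E, r1, r2, r3) \<Rightarrow>
        orbit_tail f (n + 1) = ancestors E r1 r2 \<and>
        periodic_points n f = ancestors E r1 r3"
      using P props part2_anc[OF PR rV(1)] part2_anc[OF PR rV(2)] by (simp add: toT_def)
  qed
qed

end
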